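(* Let $n\ge 1$ and let $w\in\widetilde{S_n}$ be a permutation, with image $(P(w),Q(w),\rho(w))$ under the affine matrix-ball construction (AMBC). Then $L(w)=\tau(P(w))$ and $R(w)=\tau(Q(w))$.
   Context: For $i\in\mathbb Z$ write $\overline{i}=i+n\mathbb Z$ and $[\overline n]=\{\overline 1,\dots,\overline n\}$. A partial (extended affine) permutation is an injection $w:U\to\mathbb Z$, where $U\subseteq\mathbb Z$ satisfies $x\in U\iff x+n\in U$, with $w(i+n)=w(i)+n$ for $i\in U$; if $U=\mathbb Z$ and $w$ is a bijection, $w$ is a permutation; $\widetilde{S_n}$ is the set of permutations. The balls of $w$ are the points $(i,w(i))\in\mathbb Z^2$, $i\in U$, in matrix coordinates (first coordinate = row, increasing downward/southward; second = column, increasing rightward/eastward). A cell $(i,j)$ is northwest of $(i',j')$ if $i\le i'$ and $j\le j'$ (strictly northwest if both inequalities are strict), northeast if $i\le i'$, $j\ge j'$, southwest if $i\ge i'$, $j\le j'$, etc. The translates of a cell are its images under $(i,j)\mapsto(i+kn,j+kn)$, $k\in\mathbb Z$. AMBC. Let $w$ be a nonempty partial permutation. A channel of $w$ is a set of balls of $w$, invariant under translation by $(n,n)$, any two of whose elements are comparable in the northwest order, and whose number of translation classes is maximal among such sets. There is a unique southwest-most channel $C$ (for every channel $C'$, each ball of $C$ is weakly southwest of some ball of $C'$). Number the balls of $C$ by consecutive integers $\tilde d$ increasing from northwest to southeast and set, for each ball $b$ of $w$, $d(b)=\max(\tilde d(b_k)+k)$ over all sequences of balls $b=b_0,b_1,\dots,b_k$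 with $b_{t+1}$ strictly northwest of $b_t$ and $b_k\in C$ (this maximum is finite). For each integer $t$, write the balls with $d=t$ as $(i_1,j_1),\dots,(i_s,j_s)$ with $i_1<\dots<i_s$ (then $j_1>\dots>j_s$); their outer corners are the cells $(i_{r+1},j_r)$, $1\le r<s$, and their back corner is the cell $(i_1,j_s)$. Let $\mathrm{fw}(w)$ be the partial permutation whose balls are all the outer corners (over all $t$), and let $S$ be the set of all back corners. Record: as the next row of $P$ the set of residues mod $n$ of the column indices of $S$; as the next row of $Q$ the set of residues of the row indices of $S$; as the next entry of $\rho$ the integer $\sum_{c}(\lceil c_2/n\rceil-\lceil c_1/n\rceil)$, summed over one representative $c=(c_1,c_2)$ of each translation class of $S$. AMBC starts from $w$ with $P,Q,\rho$ empty, records these first rows, replaces $w$ by $\mathrm{fw}(w)$, records second rows, and so on until the partial permutation is empty; the output is $(P(w),Q(w),\rho(w))$. Here $P,Q$ are tabloids of a common shape $\lambda$ ($\lambda_r$ = number of translation classes of back corners at step $r$): a tabloid of shape $\lambda$ is a sequence of pairwise disjoint subsets (rows) $T_1,T_2,\dots$ of $[\overline n]$ with $|T_r|=\lambda_r$, row 1 being the highest. For a permutation $w$, $\lambda$ is a partition of $n$ and each of $P(w),Q(w)$ contains every element of $[\overline n]$ exactly once. Descents: $R(w)=\{\overline i\in[\overline n]: w(i)>w(i+1)\}$ and $L(w)=\{\overline i\in[\overline n]: w^{-1}(i)>w^{-1}(i+1)\}$. For a tabloid $T$ filled with all of $[\overline n]$, $\tau(T)=\{\overline i\in[\overline n]: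 \overline i \text{ lies in a strictly higher row of } T \text{ than } \overline{i+1}\}$. *)

theory Defs
  imports Main
begin

text \<open>Balls are cells (row, column) in int x int. A partial permutation is represented
by its set of balls. Residues mod n are represented by {0..<n}.\<close>

definition transl :: "int \<Rightarrow> int \<Rightarrow> int \<times> int \<Rightarrow> int \<times> int" where
  "transl n k b = (fst b + k * n, snd b + k * n)"

definition balls :: "(int \<Rightarrow> int) \<Rightarrow> (int \<times> int) set" where
  "balls w = {(i, w i) | i. True}"

definition nw :: "int \<times> int \<Rightarrow> int \<times> int \<Rightarrow> bool" where
  "nw a b \<longleftrightarrow> fst a \<le> fst b \<and> snd a \<le> snd b"

definition snw :: "int \<times> int \<Rightarrow> int \<times> int \<Rightarrow> bool" where
  "snw a b \<longleftrightarrow> fst a < fst b \<and> snd a < snd b"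

definition sw :: "int \<times> int \<Rightarrow> int \<times> int \<Rightarrow> bool" where
  "sw a b \<longleftrightarrow> fst a \<ge> fst b \<and> snd a \<le> snd b"

definition transl_classes :: "int \<Rightarrow> (int \<times> int) set \<Rightarrow> (int \<times> int) set set" where
  "transl_classes n C = (\<lambda>b. {transl n k b | k. True}) ` C"

definition chainset :: "int \<Rightarrow> (int \<times> int) set \<Rightarrow> (int \<times> int) set \<Rightarrow> bool" where
  "chainset n B C \<longleftrightarrow> C \<subseteq> B \<and> (\<forall>b\<in>C. \<forall>k. transl n k b \<in> C)
     \<and> (\<forall>x\<in>C. \<forall>y\<in>C. nw x y \<or> nw y x)"

definition is_channel :: "int \<Rightarrow> (int \<times> int) set \<Rightarrow> (int \<times> int) set \<Rightarrow> bool" where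
  "is_channel n B C \<longleftrightarrow> chainset n B C \<and>
     (\<forall>C'. chainset n B C' \<longrightarrow> card (transl_classes n C') \<le> card (transl_classes n C))"

definition sw_channel :: "int \<Rightarrow> (int \<times> int) set \<Rightarrow> (int \<times> int) set" where
  "sw_channel n B = (THE C. is_channel n B C \<and>
     (\<forall>C'. is_channel n B C' \<longrightarrow> (\<forall>b\<in>C. \<exists>b'\<in>C'. sw b b')))"

text \<open>a numbering of the channel by consecutive integers increasing from northwest to
southeast (the choice of offset does not affect the construction)\<close>
definition chan_num :: "int \<Rightarrow> (int \<times> int) set \<Rightarrow> (int \<times> int \<Rightarrow> int)" where
  "chan_num n B = (SOME f. bij_betw f (sw_channel n B) (UNIV :: int set) \<and>
     (\<forall>x\<in>sw_channel n B. \<forall>y\<in>sw_channel n B. snw x y \<longrightarrow> f x < f y))"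

definition dval :: "int \<Rightarrow> (int \<times> int) set \<Rightarrow> int \<times> int \<Rightarrow> int" where
  "dval n B b = Sup {chan_num n B (last bs) + int (length bs) - 1 | bs.
     bs \<noteq> [] \<and> hd bs = b \<and> set bs \<subseteq> B \<and> last bs \<in> sw_channel n B \<and>
     (\<forall>t. Suc t < length bs \<longrightarrow> snw (bs ! Suc t) (bs ! t))}"

definition level :: "int \<Rightarrow> (int \<times> int) set \<Rightarrow> int \<Rightarrow> (int \<times> int) set" where
  "level n B t = {b \<in> B. dval n B b = t}"

definition fw :: "int \<Rightarrow> (int \<times> int) set \<Rightarrow> (int \<times> int) set" where
  "fw n B = {(i', j) | i j i' j'. \<exists>t. (i, j) \<in> level n B t \<and> (i', j') \<in> level n B t \<and> i < i'
      \<and> \<not> (\<exists>b\<in>level n B t. i < fst b \<and> fst b < i')}"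

definition back_corners :: "int \<Rightarrow> (int \<times> int) set \<Rightarrow> (int \<times> int) set" where
  "back_corners n B = {(i, j) | i j. \<exists>t j0 i1. (i, j0) \<in> level n B t \<and> (i1, j) \<in> level n B t
      \<and> (\<forall>b\<in>level n B t. i \<le> fst b \<and> fst b \<le> i1)}"

text \<open>rows of P and Q, indexed from 0 (row 0 = highest row)\<close>
definition ambc_P :: "int \<Rightarrow> (int \<Rightarrow> int) \<Rightarrow> nat \<Rightarrow> int set" where
  "ambc_P n w k = {j mod n | i j. (i, j) \<in> back_corners n ((fw n ^^ k) (balls w))}"

definition ambc_Q :: "int \<Rightarrow> (int \<Rightarrow> int) \<Rightarrow> nat \<Rightarrow> int set" where
  "ambc_Q n w k = {i mod n | i j. (i, j) \<in> back_corners n ((fw n ^^ k) (balls w))}"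

definition tau :: "int \<Rightarrow> (nat \<Rightarrow> int set) \<Rightarrow> int set" where
  "tau n T = {i \<in> {0..<n}. \<exists>r r'. r < r' \<and> i \<in> T r \<and> (i + 1) mod n \<in> T r'}"

definition Rdes :: "int \<Rightarrow> (int \<Rightarrow> int) \<Rightarrow> int set" where
  "Rdes n w = {i \<in> {0..<n}. w i > w (i + 1)}"

definition Ldes :: "int \<Rightarrow> (int \<Rightarrow> int) \<Rightarrow> int set" where
  "Ldes n w = {i \<in> {0..<n}. inv w i > inv w (i + 1)}"

end

theory Submission
  imports Defs
begin


lemma Sup_int_mem: fixes X :: "int set" assumes "X \<noteq> {}" "bdd_above X" shows "Sup X \<in> X"
proof -
  obtain x where "x \<in> X" "Sup X - 1 < x" using less_cSupE[of "Sup X - 1" X] assms by auto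
  moreover have "x \<le> Sup X" using cSup_upper[OF \<open>x\<in>X\<close> assms(2)] .
  ultimately have "x = Sup X" by simp
  with \<open>x\<in>X\<close> show ?thesis by simp
qed

lemma transl_fst[simp]: "fst (transl p k b) = fst b + k * p" by (simp add: transl_def)
lemma transl_snd[simp]: "snd (transl p k b) = snd b + k * p" by (simp add: transl_def)
lemma transl_0[simp]: "transl p 0 b = b" by (simp add: transl_def)
lemma transl_transl[simp]: "transl p k (transl p l b) = transl p (k + l) b"
  by (simp add: transl_def algebra_simps)
lemma transl_eq_iff: "p > 0 \<Longrightarrow> transl p k b = transl p l b \<longleftrightarrow> k = l"
  by (auto simp: transl_def prod_eq_iff)

definition invp :: "int \<Rightarrow> (int \<times> int) set \<Rightarrow> bool" where
  "invp p C \<longleftrightarrow> (\<forall>b\<in>C. \<forall>k. transl p k b \<in> C)"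

definition ppB :: "int \<Rightarrow> (int \<times> int) set \<Rightarrow> bool" where
  "ppB p B \<longleftrightarrow> invp p B \<and> inj_on fst B \<and> inj_on snd B"

definition rres :: "int \<Rightarrow> (int \<times> int) set \<Rightarrow> int set" where
  "rres p C = (\<lambda>x. fst x mod p) ` C"

lemma nw_transl[simp]: "nw (transl p k a) (transl p k b) = nw a b" by (simp add: nw_def)
lemma snw_transl[simp]: "snw (transl p k a) (transl p k b) = snw a b" by (simp add: snw_def)
lemma sw_transl[simp]: "sw (transl p k a) (transl p k b) = sw a b" by (simp add: sw_def)

lemma sw_refl[simp]: "sw a a" by (simp add: sw_def)
lemma sw_trans: "sw a b \<Longrightarrow> sw b c \<Longrightarrow> sw a c" by (auto simp: sw_def)

lemma same_res_transl:
  assumes "p > 0" "ppB p B" "x \<in> B" "y \<in> B" "fst x mod p = fst y mod p"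
  shows "\<exists>k. y = transl p k x"
proof -
  have d: "p dvd (fst y - fst x)" using assms(5)[symmetric] by (simp add: mod_eq_dvd_iff)
  define k where "k = (fst y - fst x) div p"
  have "fst y - fst x = k * p" using d unfolding k_def by simp
  hence "fst (transl p k x) = fst y" by simp
  moreover have "transl p k x \<in> B" using assms(2,3) by (auto simp: ppB_def invp_def)
  ultimately have "transl p k x = y" using assms(2,4) by (auto simp: ppB_def inj_on_def)
  thus ?thesis by auto
qed

lemma card_image_eqrel:
  assumes "\<forall>x\<in>A. \<forall>y\<in>A. g x = g y \<longleftrightarrow> h x = h y"
  shows "card (g ` A) = card (h ` A)"
proof -
  define \<phi> where "\<phi> K = h (SOME x. x \<in> A \<and> g x = K)" for K
  have phi: "\<phi> (g x) = h x" if "x \<in> A" for x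
  proof -
    have "\<exists>x'. x' \<in> A \<and> g x' = g x" using that by blast
    hence "(SOME x'. x' \<in> A \<and> g x' = g x) \<in> A \<and> g (SOME x'. x' \<in> A \<and> g x' = g x) = g x"
      by (rule someI_ex)
    thus ?thesis using assms that unfolding \<phi>_def by blast
  qed
  have "h ` A = \<phi> ` (g ` A)" using phi by (force simp: image_image)
  moreover have "inj_on \<phi> (g ` A)"
    using phi assms by (auto simp: inj_on_def)
  ultimately show ?thesis by (simp add: card_image)
qed

lemma card_tc:
  assumes "p > 0" "ppB p B" "C \<subseteq> B" "invp p C"
  shows "card (transl_classes p C) = card (rres p C)"
proof -
  have "\<forall>x\<in>C. \<forall>y\<in>C. {transl p k x |k. True} = {transl p k y |k. True} \<longleftrightarrow> fst x mod p = fst y mod p"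
  proof (intro ballI)
    fix x y assume xy: "x \<in> C" "y \<in> C"
    show "{transl p k x |k. True} = {transl p k y |k. True} \<longleftrightarrow> fst x mod p = fst y mod p"
    proof
      assume "{transl p k x |k. True} = {transl p k y |k. True}"
      hence "y \<in> {transl p k x |k. True}" by (metis (mono_tags, lifting) mem_Collect_eq transl_0)
      then obtain k where "y = transl p k x" by auto
      thus "fst x mod p = fst y mod p" by simp
    next
      assume "fst x mod p = fst y mod p"
      then obtain k where k: "y = transl p k x" using same_res_transl[OF assms(1,2)] xy assms(3) by blast
      show "{transl p k x |k. True} = {transl p k y |k. True}"
      proof (intro set_eqI iffI)
        fix z assume "z \<in> {transl p k x |k. True}"
        then obtain l where "z = transl p l x" by auto
        hence "z = transl p (l - k) y" using k by simp
        thus "z \<in> {transl p k y |k. True}" by blast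
      next
        fix z assume "z \<in> {transl p k y |k. True}"
        then obtain l where "z = transl p l y" by auto
        hence "z = transl p (l + k) x" using k by simp
        thus "z \<in> {transl p k x |k. True}" by blast
      qed
    qed
  qed
  thus ?thesis unfolding transl_classes_def rres_def by (rule card_image_eqrel)
qed

lemma rres_sub: "p > 0 \<Longrightarrow> rres p C \<subseteq> {0..<p}" by (auto simp: rres_def)
lemma rres_fin: "p > 0 \<Longrightarrow> finite (rres p C)" using rres_sub finite_subset by blast
lemma rres_card: "p > 0 \<Longrightarrow> card (rres p C) \<le> nat p"
  using card_mono[OF _ rres_sub] by fastforce

lemma chainset_invp: "chainset p B C \<Longrightarrow> invp p C" by (simp add: chainset_def invp_def)

definition meetc :: "(int \<times> int) set \<Rightarrow> (int \<times> int) set \<Rightarrow> (int \<times> int) set" where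
  "meetc A C = {x\<in>A. \<exists>y\<in>C. sw x y} \<union> {y\<in>C. \<exists>x\<in>A. sw y x}"
definition joinc :: "(int \<times> int) set \<Rightarrow> (int \<times> int) set \<Rightarrow> (int \<times> int) set" where
  "joinc A C = {x\<in>A. \<exists>y\<in>C. sw y x} \<union> {y\<in>C. \<exists>x\<in>A. sw x y}"

lemma cmp_lemma:
  assumes "nw y z \<or> nw z y" "sw x y" "\<not> (nw x z \<or> nw z x)" "fst x < fst z"
  shows False using assms by (auto simp: nw_def sw_def)

lemma meet_chain:
  assumes A: "chainset p B A" and C: "chainset p B C"
  shows "chainset p B (meetc A C)"
  unfolding chainset_def
proof (intro conjI ballI allI)
  show "meetc A C \<subseteq> B" using A C by (auto simp: chainset_def meetc_def)
next
  fix b k assume "b \<in> meetc A C"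
  hence "(b \<in> A \<and> (\<exists>y\<in>C. sw b y)) \<or> (b \<in> C \<and> (\<exists>x\<in>A. sw b x))" unfolding meetc_def by blast
  thus "transl p k b \<in> meetc A C"
  proof
    assume h: "b \<in> A \<and> (\<exists>y\<in>C. sw b y)"
    then obtain y where "y \<in> C" "sw b y" by blast
    hence "transl p k y \<in> C" "sw (transl p k b) (transl p k y)" using C by (auto simp: chainset_def)
    moreover have "transl p k b \<in> A" using h A by (auto simp: chainset_def)
    ultimately show ?thesis unfolding meetc_def by blast
  next
    assume h: "b \<in> C \<and> (\<exists>x\<in>A. sw b x)"
    then obtain y where "y \<in> A" "sw b y" by blast
    hence "transl p k y \<in> A" "sw (transl p k b) (transl p k y)" using A by (auto simp: chainset_def)
    moreover have "transl p k b \<in> C" using h C by (auto simp: chainset_def)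
    ultimately show ?thesis unfolding meetc_def by blast
  qed
next
  fix x z assume x: "x \<in> meetc A C" and z: "z \<in> meetc A C"
  have cA: "\<forall>x\<in>A. \<forall>y\<in>A. nw x y \<or> nw y x" and cC: "\<forall>x\<in>C. \<forall>y\<in>C. nw x y \<or> nw y x"
    using A C by (auto simp: chainset_def)
  show "nw x z \<or> nw z x"
  proof (rule ccontr)
    assume nc: "\<not> (nw x z \<or> nw z x)"
    hence ne: "fst x \<noteq> fst z" and ne2: "snd x \<noteq> snd z" by (auto simp: nw_def)
    consider "x \<in> A" "z \<in> A" | "x \<in> C" "z \<in> C"
      | "x \<in> A" "\<exists>y\<in>C. sw x y" "z \<in> C" "\<exists>u\<in>A. sw z u"
      | "z \<in> A" "\<exists>y\<in>C. sw z y" "x \<in> C" "\<exists>u\<in>A. sw x u"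
      using x z unfolding meetc_def by blast
    thus False
    proof cases
      case 1 thus ?thesis using cA nc by blast
    next
      case 2 thus ?thesis using cC nc by blast
    next
      case 3
      then obtain y u where y: "y \<in> C" "sw x y" and u: "u \<in> A" "sw z u" by blast
      show ?thesis
      proof (cases "fst x < fst z")
        case True
        have "nw y z \<or> nw z y" using cC y 3 by blast
        thus ?thesis using cmp_lemma[of y z x] y True nc by blast
      next
        case False
        hence "fst z < fst x" using ne by simp
        have "nw u x \<or> nw x u" using cA u 3 by blast
        thus ?thesis using cmp_lemma[of u x z] u \<open>fst z < fst x\<close> nc by blast
      qed
    next
      case 4
      then obtain y u where y: "y \<in> C" "sw z y" and u: "u \<in> A" "sw x u" by blast
      show ?thesis
      proof (cases "fst z < fst x")
        case True
        have "nw y x \<or> nw x y" using cC y 4 by blast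
        thus ?thesis using cmp_lemma[of y x z] y True nc by blast
      next
        case False
        hence "fst x < fst z" using ne by simp
        have "nw u z \<or> nw z u" using cA u 4 by blast
        thus ?thesis using cmp_lemma[of u z x] u \<open>fst x < fst z\<close> nc by blast
      qed
    qed
  qed
qed

lemma cmp_lemma2:
  assumes "nw y z \<or> nw z y" "sw y x" "\<not> (nw x z \<or> nw z x)" "fst z < fst x"
  shows False using assms by (auto simp: nw_def sw_def)

lemma join_chain:
  assumes A: "chainset p B A" and C: "chainset p B C"
  shows "chainset p B (joinc A C)"
  unfolding chainset_def
proof (intro conjI ballI allI)
  show "joinc A C \<subseteq> B" using A C by (auto simp: chainset_def joinc_def)
next
  fix b k assume "b \<in> joinc A C"
  hence "(b \<in> A \<and> (\<exists>y\<in>C. sw y b)) \<or> (b \<in> C \<and> (\<exists>x\<in>A. sw x b))" unfolding joinc_def by blast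
  thus "transl p k b \<in> joinc A C"
  proof
    assume h: "b \<in> A \<and> (\<exists>y\<in>C. sw y b)"
    then obtain y where "y \<in> C" "sw y b" by blast
    hence "transl p k y \<in> C" "sw (transl p k y) (transl p k b)" using C by (auto simp: chainset_def)
    moreover have "transl p k b \<in> A" using h A by (auto simp: chainset_def)
    ultimately show ?thesis unfolding joinc_def by blast
  next
    assume h: "b \<in> C \<and> (\<exists>x\<in>A. sw x b)"
    then obtain y where "y \<in> A" "sw y b" by blast
    hence "transl p k y \<in> A" "sw (transl p k y) (transl p k b)" using A by (auto simp: chainset_def)
    moreover have "transl p k b \<in> C" using h C by (auto simp: chainset_def)
    ultimately show ?thesis unfolding joinc_def by blast
  qed
next
  fix x z assume x: "x \<in> joinc A C" and z: "z \<in> joinc A C"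
  have cA: "\<forall>x\<in>A. \<forall>y\<in>A. nw x y \<or> nw y x" and cC: "\<forall>x\<in>C. \<forall>y\<in>C. nw x y \<or> nw y x"
    using A C by (auto simp: chainset_def)
  show "nw x z \<or> nw z x"
  proof (rule ccontr)
    assume nc: "\<not> (nw x z \<or> nw z x)"
    hence ne: "fst x \<noteq> fst z" by (auto simp: nw_def)
    consider "x \<in> A" "z \<in> A" | "x \<in> C" "z \<in> C"
      | "x \<in> A" "\<exists>y\<in>C. sw y x" "z \<in> C" "\<exists>u\<in>A. sw u z"
      | "z \<in> A" "\<exists>y\<in>C. sw y z" "x \<in> C" "\<exists>u\<in>A. sw u x"
      using x z unfolding joinc_def by blast
    thus False
    proof cases
      case 1 thus ?thesis using cA nc by blast
    next
      case 2 thus ?thesis using cC nc by blast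
    next
      case 3
      then obtain y u where y: "y \<in> C" "sw y x" and u: "u \<in> A" "sw u z" by blast
      show ?thesis
      proof (cases "fst z < fst x")
        case True
        have "nw y z \<or> nw z y" using cC y 3 by blast
        thus ?thesis using cmp_lemma2[of y z x] y True nc by blast
      next
        case False
        hence "fst x < fst z" using ne by simp
        have "nw u x \<or> nw x u" using cA u 3 by blast
        thus ?thesis using cmp_lemma2[of u x z] u \<open>fst x < fst z\<close> nc by blast
      qed
    next
      case 4
      then obtain y u where y: "y \<in> C" "sw y z" and u: "u \<in> A" "sw u x" by blast
      show ?thesis
      proof (cases "fst x < fst z")
        case True
        have "nw y x \<or> nw x y" using cC y 4 by blast
        thus ?thesis using cmp_lemma2[of y x z] y True nc by blast
      next
        case False
        hence "fst z < fst x" using ne by simp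
        have "nw u z \<or> nw z u" using cA u 4 by blast
        thus ?thesis using cmp_lemma2[of u z x] u \<open>fst z < fst x\<close> nc by blast
      qed
    qed
  qed
qed



lemma channel_maxc:
  assumes "p > 0" "ppB p B" "is_channel p B C" "chainset p B C'"
  shows "card (rres p C') \<le> card (rres p C)"
proof -
  have "card (transl_classes p C') \<le> card (transl_classes p C)" using assms(3,4) by (simp add: is_channel_def)
  moreover have "card (transl_classes p C') = card (rres p C')"
    using card_tc[OF assms(1,2)] assms(4) by (simp add: chainset_def invp_def)
  moreover have "card (transl_classes p C) = card (rres p C)"
    using card_tc[OF assms(1,2)] assms(3) by (simp add: is_channel_def chainset_def invp_def)
  ultimately show ?thesis by simp
qed

lemma channel_chain: "is_channel p B C \<Longrightarrow> chainset p B C" by (simp add: is_channel_def)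

lemma gap:
  assumes p: "p > 0" and B: "ppB p B" and C: "is_channel p B C" and a: "a \<in> B"
  shows "\<exists>y\<in>C. sw a y \<or> sw y a"
proof (rule ccontr)
  assume no: "\<not> (\<exists>y\<in>C. sw a y \<or> sw y a)"
  have Cc: "chainset p B C" using C by (simp add: is_channel_def)
  have aC: "a \<notin> C" using no by auto
  have cmp: "nw a y \<or> nw y a" if "y \<in> C" for y
    using no that by (auto simp: nw_def sw_def)
  define Ob where "Ob = {transl p k a |k. True}"
  define C' where "C' = C \<union> Ob"
  have ch': "chainset p B C'"
    unfolding chainset_def
  proof (intro conjI ballI allI)
    show "C' \<subseteq> B" using Cc a B unfolding C'_def Ob_def chainset_def ppB_def invp_def by auto
  next
    fix b k assume "b \<in> C'"
    thus "transl p k b \<in> C'" using Cc unfolding C'_def Ob_def chainset_def by auto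
  next
    fix x y assume x: "x \<in> C'" and y: "y \<in> C'"
    have oc: "nw u v \<or> nw v u" if uv: "u \<in> Ob" "v \<in> C" for u v
    proof -
      obtain k where u: "u = transl p k a" using uv unfolding Ob_def by auto
      have "transl p (-k) v \<in> C" using Cc uv by (simp add: chainset_def)
      hence "nw a (transl p (-k) v) \<or> nw (transl p (-k) v) a" using cmp by blast
      thus ?thesis using u by (auto simp: nw_def)
    qed
    have oo: "nw u v \<or> nw v u" if uv: "u \<in> Ob" "v \<in> Ob" for u v
    proof -
      obtain k l where "u = transl p k a" "v = transl p l a" using uv unfolding Ob_def by auto
      moreover have "k * p \<le> l * p \<or> l * p \<le> k * p" by linarith
      ultimately show ?thesis using p by (auto simp: nw_def)
    qed
    show "nw x y \<or> nw y x"
      using x y oc oo Cc unfolding C'_def chainset_def by blast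
  qed
  have ro: "rres p Ob = {fst a mod p}"
  proof (intro set_eqI iffI)
    fix r assume "r \<in> rres p Ob"
    then obtain k where "r = fst (transl p k a) mod p" unfolding rres_def Ob_def by auto
    thus "r \<in> {fst a mod p}" by simp
  next
    fix r assume "r \<in> {fst a mod p}" hence "r = fst (transl p 0 a) mod p" by simp
    moreover have "transl p 0 a \<in> Ob" unfolding Ob_def by blast
    ultimately show "r \<in> rres p Ob" unfolding rres_def by blast
  qed
  have nin: "fst a mod p \<notin> rres p C"
  proof
    assume "fst a mod p \<in> rres p C"
    then obtain c where c: "c \<in> C" "fst c mod p = fst a mod p" by (auto simp: rres_def)
    then obtain k where "a = transl p k c" using same_res_transl[OF p B, of c a] a Cc by (auto simp: chainset_def)
    thus False using c Cc aC by (auto simp: chainset_def)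
  qed
  have "rres p C' = insert (fst a mod p) (rres p C)"
    using ro unfolding C'_def rres_def by auto
  hence "card (rres p C') = card (rres p C) + 1" using nin rres_fin[OF p] by simp
  moreover have "card (rres p C') \<le> card (rres p C)" using channel_maxc[OF p B C ch'] .
  ultimately show False by simp
qed

lemma meet_channel:
  assumes p: "p > 0" and B: "ppB p B" and A: "is_channel p B A" and C: "is_channel p B C"
  shows "is_channel p B (meetc A C)"
proof -
  have Ac: "chainset p B A" and Cc: "chainset p B C" using A C by (auto simp: is_channel_def)
  have mc: "chainset p B (meetc A C)" and jc: "chainset p B (joinc A C)"
    using meet_chain[OF Ac Cc] join_chain[OF Ac Cc] .
  have eq: "card (rres p A) = card (rres p C)"
    using channel_maxc[OF p B A Cc] channel_maxc[OF p B C Ac] by simp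
  have U: "rres p A \<union> rres p C \<subseteq> rres p (meetc A C) \<union> rres p (joinc A C)"
  proof
    fix r assume "r \<in> rres p A \<union> rres p C"
    then obtain x where x: "x \<in> A \<union> C" "r = fst x mod p" by (auto simp: rres_def)
    have "x \<in> meetc A C \<union> joinc A C"
    proof (cases "x \<in> A")
      case True
      hence "x \<in> B" using Ac by (auto simp: chainset_def)
      then obtain y where "y \<in> C" "sw x y \<or> sw y x" using gap[OF p B C] by blast
      thus ?thesis using True unfolding meetc_def joinc_def by blast
    next
      case False
      hence xC: "x \<in> C" using x by simp
      hence "x \<in> B" using Cc by (auto simp: chainset_def)
      then obtain y where "y \<in> A" "sw x y \<or> sw y x" using gap[OF p B A] by blast
      thus ?thesis using xC unfolding meetc_def joinc_def by blast
    qed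
    thus "r \<in> rres p (meetc A C) \<union> rres p (joinc A C)" using x by (auto simp: rres_def)
  qed
  have I: "rres p A \<inter> rres p C \<subseteq> rres p (meetc A C) \<inter> rres p (joinc A C)"
  proof
    fix r assume "r \<in> rres p A \<inter> rres p C"
    then obtain x y where x: "x \<in> A" "r = fst x mod p" and y: "y \<in> C" "r = fst y mod p"
      by (auto simp: rres_def)
    obtain k where "x = transl p k y" using same_res_transl[OF p B, of y x] x y Ac Cc
      by (auto simp: chainset_def)
    hence xC: "x \<in> C" using Cc y by (auto simp: chainset_def)
    have "x \<in> meetc A C" "x \<in> joinc A C" using x xC sw_refl unfolding meetc_def joinc_def by blast+
    thus "r \<in> rres p (meetc A C) \<inter> rres p (joinc A C)" using x by (auto simp: rres_def)
  qed
  have f: "finite (rres p X)" for X using rres_fin[OF p] .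
  have "card (rres p A) + card (rres p C) = card (rres p A \<union> rres p C) + card (rres p A \<inter> rres p C)"
    using card_Un_Int[OF f f] .
  also have "\<dots> \<le> card (rres p (meetc A C) \<union> rres p (joinc A C)) + card (rres p (meetc A C) \<inter> rres p (joinc A C))"
    using card_mono[OF _ U] card_mono[OF _ I] f by (meson add_mono finite_Int finite_UnI)
  also have "\<dots> = card (rres p (meetc A C)) + card (rres p (joinc A C))"
    using card_Un_Int[OF f f] by simp
  finally have s: "card (rres p A) + card (rres p C) \<le> card (rres p (meetc A C)) + card (rres p (joinc A C))" .
  have "card (rres p (joinc A C)) \<le> card (rres p A)" using channel_maxc[OF p B A jc] .
  moreover have "card (rres p (meetc A C)) \<le> card (rres p A)" using channel_maxc[OF p B A mc] .
  ultimately have meq: "card (rres p (meetc A C)) = card (rres p A)" using s eq by linarith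
  show ?thesis unfolding is_channel_def
  proof (intro conjI allI impI)
    show "chainset p B (meetc A C)" by fact
    fix C' assume c': "chainset p B C'"
    have "card (transl_classes p C') = card (rres p C')"
      using card_tc[OF p B] c' by (simp add: chainset_def invp_def)
    also have "\<dots> \<le> card (rres p A)" using channel_maxc[OF p B A c'] .
    also have "\<dots> = card (transl_classes p (meetc A C))"
      using card_tc[OF p B] mc meq by (simp add: chainset_def invp_def)
    finally show "card (transl_classes p C') \<le> card (transl_classes p (meetc A C))" .
  qed
qed

lemma channel_exists:
  assumes p: "p > 0" and B: "ppB p B"
  shows "\<exists>C. is_channel p B C"
proof -
  have "chainset p B {}" by (simp add: chainset_def)
  moreover have "\<forall>C. chainset p B C \<longrightarrow> card (transl_classes p C) < nat p + 1"
  proof (intro allI impI)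
    fix C assume "chainset p B C"
    hence "card (transl_classes p C) = card (rres p C)"
      using card_tc[OF p B] by (simp add: chainset_def invp_def)
    thus "card (transl_classes p C) < nat p + 1" using rres_card[OF p, of C] by simp
  qed
  ultimately obtain C where "chainset p B C" "\<forall>C'. chainset p B C' \<longrightarrow> card (transl_classes p C') \<le> card (transl_classes p C)"
    using ex_has_greatest_nat[of "chainset p B" "{}" "\<lambda>C. card (transl_classes p C)" "nat p + 1"] by blast
  thus ?thesis unfolding is_channel_def by blast
qed

lemma chain_det:
  assumes p: "p > 0" and B: "ppB p B" and C: "chainset p B C"
  shows "C = {b\<in>B. fst b mod p \<in> rres p C}"
proof
  show "C \<subseteq> {b\<in>B. fst b mod p \<in> rres p C}" using C by (auto simp: chainset_def rres_def)
next
  show "{b\<in>B. fst b mod p \<in> rres p C} \<subseteq> C"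
  proof
    fix b assume "b \<in> {b\<in>B. fst b mod p \<in> rres p C}"
    then obtain c where "b \<in> B" "c \<in> C" "fst c mod p = fst b mod p" by (auto simp: rres_def)
    moreover then obtain k where "b = transl p k c" using same_res_transl[OF p B, of c b] C
      by (auto simp: chainset_def)
    ultimately show "b \<in> C" using C by (auto simp: chainset_def)
  qed
qed

lemma channels_finite:
  assumes p: "p > 0" and B: "ppB p B"
  shows "finite {C. is_channel p B C}"
proof -
  let ?S = "{C. is_channel p B C}"
  have "inj_on (rres p) ?S"
  proof (rule inj_onI)
    fix C1 C2 assume "C1 \<in> ?S" "C2 \<in> ?S" "rres p C1 = rres p C2"
    thus "C1 = C2" using chain_det[OF p B, of C1] chain_det[OF p B, of C2] by (auto simp: is_channel_def)
  qed
  moreover have "rres p ` ?S \<subseteq> Pow {0..<p}" using rres_sub[OF p] by auto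
  hence "finite (rres p ` ?S)" by (meson finite_Pow_iff finite_atLeastLessThan_int finite_subset)
  ultimately show ?thesis using finite_imageD by blast
qed

lemma swmost_fold:
  assumes p: "p > 0" and B: "ppB p B"
  shows "finite F \<Longrightarrow> F \<subseteq> {C. is_channel p B C} \<Longrightarrow>
     \<exists>C. is_channel p B C \<and> (\<forall>C'\<in>F. \<forall>b\<in>C. \<exists>b'\<in>C'. sw b b')"
proof (induction F rule: finite_induct)
  case empty thus ?case using channel_exists[OF p B] by auto
next
  case (insert C'' F)
  then obtain C where C: "is_channel p B C" "\<forall>C'\<in>F. \<forall>b\<in>C. \<exists>b'\<in>C'. sw b b'" by auto
  have C'': "is_channel p B C''" using insert by auto
  let ?M = "meetc C C''"
  have "is_channel p B ?M" using meet_channel[OF p B C(1) C''] .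
  moreover have "\<forall>C'\<in>insert C'' F. \<forall>b\<in>?M. \<exists>b'\<in>C'. sw b b'"
  proof (intro ballI)
    fix C' b assume C': "C' \<in> insert C'' F" and b: "b \<in> ?M"
    show "\<exists>b'\<in>C'. sw b b'"
    proof (cases "C' = C''")
      case True thus ?thesis using b sw_refl unfolding meetc_def by blast
    next
      case False
      hence C'F: "C' \<in> F" using C' by auto
      from b consider "b \<in> C" | x where "x \<in> C" "sw b x" unfolding meetc_def by blast
      thus ?thesis
      proof cases
        case 1 thus ?thesis using C(2) C'F by blast
      next
        case 2
        then obtain b' where "b' \<in> C'" "sw x b'" using C(2) C'F by blast
        thus ?thesis using 2 sw_trans by blast
      qed
    qed
  qed
  ultimately show ?case by blast
qed

lemma sw_chain_eq:
  assumes B: "ppB p B" "x \<in> B" "y \<in> B" "nw x y \<or> nw y x" "sw x y"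
  shows "x = y"
proof -
  have "fst x = fst y \<or> snd x = snd y" using assms(4,5) by (auto simp: nw_def sw_def)
  thus ?thesis using B by (auto simp: ppB_def inj_on_def)
qed

lemma sw_antisym: "sw a b \<Longrightarrow> sw b a \<Longrightarrow> a = b" by (auto simp: sw_def prod_eq_iff)

definition swmost :: "int \<Rightarrow> (int \<times> int) set \<Rightarrow> (int \<times> int) set \<Rightarrow> bool" where
  "swmost p B C \<longleftrightarrow> is_channel p B C \<and> (\<forall>C'. is_channel p B C' \<longrightarrow> (\<forall>b\<in>C. \<exists>b'\<in>C'. sw b b'))"

lemma swmost_ex1:
  assumes p: "p > 0" and B: "ppB p B"
  shows "\<exists>!C. swmost p B C"
proof -
  obtain C where C: "is_channel p B C" "\<forall>C'\<in>{C. is_channel p B C}. \<forall>b\<in>C. \<exists>b'\<in>C'. sw b b'"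
    using swmost_fold[OF p B channels_finite[OF p B]] by blast
  have ex: "swmost p B C" using C unfolding swmost_def by auto
  have sub: "C1 \<subseteq> C2" if 1: "swmost p B C1" and 2: "swmost p B C2" for C1 C2
  proof
    fix b assume b: "b \<in> C1"
    obtain b' where b': "b' \<in> C2" "sw b b'" using 1 2 b unfolding swmost_def by blast
    obtain b'' where b'': "b'' \<in> C1" "sw b' b''" using 1 2 b' unfolding swmost_def by blast
    have c1: "chainset p B C1" using 1 by (simp add: swmost_def is_channel_def)
    have "sw b b''" using b' b'' sw_trans by blast
    moreover have "nw b b'' \<or> nw b'' b" using c1 b b'' by (simp add: chainset_def)
    moreover have "b \<in> B" "b'' \<in> B" using c1 b b'' by (auto simp: chainset_def)
    ultimately have "b = b''" using sw_chain_eq[OF B] by blast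
    hence "b = b'" using b' b'' sw_antisym by blast
    thus "b \<in> C2" using b' by simp
  qed
  show ?thesis using ex sub by blast
qed

lemma sw_channel_prop:
  assumes "n > 0" "ppB n B"
  shows "swmost n B (sw_channel n B)"
proof -
  have "sw_channel n B = (THE C. swmost n B C)"
    unfolding sw_channel_def swmost_def by simp
  thus ?thesis using theI'[OF swmost_ex1[OF assms]] by simp
qed



lemma transl_mult: "transl (q * n) k x = transl n (k * q) x"
  by (simp add: transl_def algebra_simps)

lemma ppB_mult:
  assumes "ppB n B" shows "ppB (q * n) B"
  using assms unfolding ppB_def invp_def by (simp add: transl_mult)

definition trs :: "int \<Rightarrow> int \<Rightarrow> (int \<times> int) set \<Rightarrow> (int \<times> int) set" where
  "trs n k X = transl n k ` X"

lemma transl_comm: "transl p k (transl n l x) = transl n l (transl p k x)"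
  by (simp add: transl_def algebra_simps)

lemma chainset_trs:
  assumes "ppB n B" "chainset p B X"
  shows "chainset p B (trs n k X)"
  unfolding chainset_def trs_def
proof (intro conjI ballI allI)
  show "transl n k ` X \<subseteq> B" using assms by (auto simp: chainset_def ppB_def invp_def)
next
  fix b l assume "b \<in> transl n k ` X"
  then obtain x where "x \<in> X" "b = transl n k x" by auto
  moreover have "transl p l x \<in> X" using assms(2) \<open>x \<in> X\<close> by (simp add: chainset_def)
  ultimately show "transl p l b \<in> transl n k ` X" by (metis image_eqI transl_comm)
next
  fix a b assume "a \<in> transl n k ` X" "b \<in> transl n k ` X"
  then obtain x y where xy: "x \<in> X" "y \<in> X" "a = transl n k x" "b = transl n k y" by auto
  hence "nw x y \<or> nw y x" using assms(2) by (simp add: chainset_def)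
  thus "nw a b \<or> nw b a" using xy by simp
qed

lemma card_rres_trs:
  assumes "p > 0"
  shows "card (rres p (trs n k X)) = card (rres p X)"
proof -
  have "card (rres p (trs n k X)) = card ((\<lambda>x. (fst x + k * n) mod p) ` X)"
    unfolding rres_def trs_def image_image by simp
  also have "\<dots> = card ((\<lambda>x. fst x mod p) ` X)"
  proof (rule card_image_eqrel, intro ballI)
    fix x y
    show "((fst x + k * n) mod p = (fst y + k * n) mod p) = (fst x mod p = fst y mod p)"
      by (metis add_diff_cancel_right' mod_add_cong mod_diff_cong)
  qed
  finally show ?thesis by (simp add: rres_def)
qed

lemma channel_trs:
  assumes p: "p > 0" and B: "ppB p B" and Bn: "ppB n B" and C: "is_channel p B X"
  shows "is_channel p B (trs n k X)"
proof -
  have Xc: "chainset p B X" using C by (simp add: is_channel_def)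
  have Tc: "chainset p B (trs n k X)" using chainset_trs[OF Bn Xc] .
  show ?thesis unfolding is_channel_def
  proof (intro conjI allI impI Tc)
    fix C' assume c': "chainset p B C'"
    have "card (transl_classes p C') = card (rres p C')"
      using card_tc[OF p B] c' by (simp add: chainset_def invp_def)
    also have "\<dots> \<le> card (rres p X)" using channel_maxc[OF p B C c'] .
    also have "\<dots> = card (rres p (trs n k X))" using card_rres_trs[OF p] by simp
    also have "\<dots> = card (transl_classes p (trs n k X))"
      using card_tc[OF p B] Tc by (simp add: chainset_def invp_def)
    finally show "card (transl_classes p C') \<le> card (transl_classes p (trs n k X))" .
  qed
qed

lemma trs_trs: "trs n k (trs n l X) = trs n (k + l) X"
  by (simp add: trs_def image_image)

lemma trs_0: "trs n 0 X = X" by (simp add: trs_def)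

lemma swmost_trs:
  assumes p: "p > 0" and B: "ppB p B" and Bn: "ppB n B" and S: "swmost p B X"
  shows "swmost p B (trs n k X)"
  unfolding swmost_def
proof (intro conjI allI impI ballI)
  show "is_channel p B (trs n k X)" using channel_trs[OF p B Bn] S by (simp add: swmost_def)
  fix C' b assume C': "is_channel p B C'" and b: "b \<in> trs n k X"
  have "is_channel p B (trs n (-k) C')" using channel_trs[OF p B Bn C'] .
  then obtain x where x: "x \<in> X" "b = transl n k x" using b by (auto simp: trs_def)
  obtain y where y: "y \<in> trs n (-k) C'" "sw x y" using S x \<open>is_channel p B (trs n (-k) C')\<close>
    unfolding swmost_def by blast
  then obtain z where z: "z \<in> C'" "y = transl n (-k) z" by (auto simp: trs_def)
  have "sw (transl n k x) (transl n k y)" using y by simp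
  moreover have "transl n k y = z" using z by simp
  ultimately show "\<exists>b'\<in>C'. sw b b'" using z x by auto
qed

lemma int_cases_nat: "(\<And>j::nat. P (int j)) \<Longrightarrow> (\<And>j::nat. P (- int j)) \<Longrightarrow> P (k::int)"
  by (metis int_cases2)

lemma dens_main:
  assumes n: "n > 0" and q: "q \<ge> 1" and Bn: "ppB n B" and C: "is_channel n B C"
      and X: "chainset (q * n) B X"
  shows "card (rres (q * n) X) \<le> nat q * card (rres n C)"
proof -
  define p where "p = q * n"
  have p: "p > 0" using n q unfolding p_def by (simp add: mult_pos_pos)
  have B: "ppB p B" using ppB_mult[OF Bn] p_def by simp
  obtain G where G: "swmost p B G" using swmost_ex1[OF p B] by blast
  have T: "trs n 1 G = G" using swmost_trs[OF p B Bn G, of 1] G swmost_ex1[OF p B] by blast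
  have T': "trs n (-1) G = G"
  proof -
    have "trs n (-1) (trs n 1 G) = G" by (simp add: trs_trs trs_0)
    thus ?thesis using T by simp
  qed
  have Tnat: "trs n (int j) G = G \<and> trs n (- int j) G = G" for j :: nat
  proof (induction j)
    case 0 thus ?case by (simp add: trs_0)
  next
    case (Suc j)
    have a: "trs n (int (Suc j)) G = trs n 1 (trs n (int j) G)" by (simp add: trs_trs add.commute)
    have b: "trs n (- int (Suc j)) G = trs n (-1) (trs n (- int j) G)" by (simp add: trs_trs)
    show ?case using a b Suc T T' by simp
  qed
  have Tall: "trs n k G = G" for k
  proof (rule int_cases_nat[where k=k])
    fix j :: nat show "trs n (int j) G = G" using Tnat by blast
  next
    fix j :: nat show "trs n (- int j) G = G" using Tnat by blast
  qed
  have Gc: "chainset p B G" using G by (simp add: swmost_def is_channel_def)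
  have Gn: "chainset n B G" unfolding chainset_def
  proof (intro conjI ballI allI)
    show "G \<subseteq> B" using Gc by (simp add: chainset_def)
    fix b k assume "b \<in> G"
    thus "transl n k b \<in> G" using Tall[of k] by (auto simp: trs_def)
  next
    fix x y assume "x \<in> G" "y \<in> G" thus "nw x y \<or> nw y x" using Gc by (simp add: chainset_def)
  qed
  have eq: "rres p G = (\<lambda>(a, s). s + a * n) ` ({0..<q} \<times> rres n G)"
  proof (intro set_eqI iffI)
    fix r assume "r \<in> rres p G"
    then obtain x where x: "x \<in> G" "r = fst x mod p" by (auto simp: rres_def)
    have "r mod n = fst x mod n" using x(2) unfolding p_def by (simp add: mod_mod_cancel)
    moreover have "0 \<le> r div n" using x(2) p n unfolding p_def
      by (simp add: pos_imp_zdiv_nonneg_iff)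
    moreover have "r < q * n" using x(2) p unfolding p_def by simp
    hence "r div n < q" using n
      by (smt (verit, del_insts) minus_div_mult_eq_mod mult_right_less_imp_less pos_mod_sign)
    moreover have "r = r mod n + (r div n) * n" by simp
    ultimately show "r \<in> (\<lambda>(a, s). s + a * n) ` ({0..<q} \<times> rres n G)"
      using x(1) by (force simp: rres_def)
  next
    fix r assume "r \<in> (\<lambda>(a, s). s + a * n) ` ({0..<q} \<times> rres n G)"
    then obtain a x where ax: "0 \<le> a" "a < q" "x \<in> G" "r = fst x mod n + a * n" by (auto simp: rres_def)
    define x' where "x' = transl n (a - fst x div n) x"
    have "x' \<in> G" using Gn ax(3) unfolding x'_def chainset_def by blast
    have "fst x' = fst x mod n + a * n" unfolding x'_def
      by (simp add: algebra_simps)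
    hence fx: "fst x' = r" using ax by simp
    have m1: "0 \<le> fst x mod n" "fst x mod n < n" using n by simp_all
    moreover have "a * n \<le> (q - 1) * n" using ax n by (intro mult_right_mono) auto
    hence "a * n \<le> q * n - n" by (simp add: algebra_simps)
    moreover have "0 \<le> a * n" using ax n by simp
    ultimately have "0 \<le> r" "r < p" using ax(4) unfolding p_def by linarith+
    hence "fst x' mod p = r" using fx by simp
    thus "r \<in> rres p G" using \<open>x' \<in> G\<close> by (auto simp: rres_def)
  qed
  have inj: "inj_on (\<lambda>(a, s). s + a * n) ({0..<q} \<times> rres n G)"
  proof (rule inj_onI, clarsimp)
    fix a s a' s' assume "0 \<le> a" "a < q" "s \<in> rres n G" "0 \<le> a'" "a' < q" "s' \<in> rres n G"
      "s + a * n = s' + a' * n"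
    moreover have "0 \<le> s" "s < n" "0 \<le> s'" "s' < n" using \<open>s \<in> rres n G\<close> \<open>s' \<in> rres n G\<close> n
      by (auto simp: rres_def)
    ultimately have e: "s + a * n = s' + a' * n" "0 \<le> s" "s < n" "0 \<le> s'" "s' < n" by auto
    have "(s + a * n) div n = a" using e(2,3) n by simp
    moreover have "(s' + a' * n) div n = a'" using e(4,5) n by simp
    ultimately have "a = a'" using e(1) by simp
    thus "a = a' \<and> s = s'" using e(1) by simp
  qed
  have "card (rres p G) = nat q * card (rres n G)"
    using card_image[OF inj] eq by (simp add: card_cartesian_product)
  moreover have "card (rres n G) \<le> card (rres n C)" using channel_maxc[OF n Bn C Gn] .
  moreover have "card (rres p X) \<le> card (rres p G)"
    using channel_maxc[OF p B, of G X] G X p_def by (simp add: swmost_def)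
  ultimately have "card (rres p X) \<le> nat q * card (rres n C)"
  proof -
    assume a: "card (rres p G) = nat q * card (rres n G)" "card (rres n G) \<le> card (rres n C)"
      "card (rres p X) \<le> card (rres p G)"
    have "nat q * card (rres n G) \<le> nat q * card (rres n C)" using a(2) by (rule mult_le_mono2)
    thus ?thesis using a(1,3) by linarith
  qed
  thus ?thesis unfolding p_def .
qed



lemma chain_fst_snw:
  assumes "ppB p B" "chainset p' B C" "x \<in> C" "y \<in> C" "fst x < fst y"
  shows "snw x y"
proof -
  have "nw x y \<or> nw y x" using assms(2-4) by (simp add: chainset_def)
  hence "nw x y" using assms(5) by (auto simp: nw_def)
  moreover have "x \<noteq> y" using assms(5) by auto
  moreover have "x \<in> B" "y \<in> B" using assms(2-4) by (auto simp: chainset_def)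
  ultimately have "snd x \<noteq> snd y" using assms(1) by (auto simp: ppB_def inj_on_def)
  thus ?thesis using \<open>nw x y\<close> assms(5) by (auto simp: nw_def snw_def)
qed

locale amb =
  fixes n :: int and B :: "(int \<times> int) set"
  assumes n: "n > 0" and B: "ppB n B" and ne: "B \<noteq> {}"
begin

abbreviation "C \<equiv> sw_channel n B"
abbreviation "m \<equiv> card (rres n C)"
abbreviation "f \<equiv> chan_num n B"

lemma C_sw: "swmost n B C" using sw_channel_prop[OF n B] .
lemma C_ch: "is_channel n B C" using C_sw by (simp add: swmost_def)
lemma C_chain: "chainset n B C" using C_ch by (simp add: is_channel_def)
lemma C_sub: "C \<subseteq> B" using C_chain by (simp add: chainset_def)
lemma C_inv: "c \<in> C \<Longrightarrow> transl n k c \<in> C" using C_chain by (simp add: chainset_def)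
lemma B_inv: "b \<in> B \<Longrightarrow> transl n k b \<in> B" using B by (simp add: ppB_def invp_def)
lemma B_fst: "x \<in> B \<Longrightarrow> y \<in> B \<Longrightarrow> fst x = fst y \<Longrightarrow> x = y" using B by (auto simp: ppB_def inj_on_def)
lemma B_snd: "x \<in> B \<Longrightarrow> y \<in> B \<Longrightarrow> snd x = snd y \<Longrightarrow> x = y" using B by (auto simp: ppB_def inj_on_def)

lemma m_pos: "m \<ge> 1"
proof -
  obtain b where b: "b \<in> B" using ne by auto
  define O1 where "O1 = {transl n k b |k. True}"
  have "chainset n B O1" unfolding chainset_def O1_def
  proof (intro conjI ballI allI)
    show "{transl n k b |k. True} \<subseteq> B" using B_inv[OF b] by auto
  next
    fix x k assume "x \<in> {transl n k b |k. True}" thus "transl n k x \<in> {transl n k b |k. True}" by auto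
  next
    fix x y assume "x \<in> {transl n k b |k. True}" "y \<in> {transl n k b |k. True}"
    then obtain k l where "x = transl n k b" "y = transl n l b" by auto
    moreover have "k * n \<le> l * n \<or> l * n \<le> k * n" by linarith
    ultimately show "nw x y \<or> nw y x" by (auto simp: nw_def)
  qed
  hence "card (rres n O1) \<le> m" using channel_maxc[OF n B C_ch] by blast
  moreover have "rres n O1 \<noteq> {}" unfolding rres_def O1_def by blast
  hence "card (rres n O1) \<ge> 1" using rres_fin[OF n] by (simp add: Suc_leI card_gt_0_iff)
  ultimately show ?thesis by simp
qed

lemma C_ne: "C \<noteq> {}" using m_pos by (auto simp: rres_def)

lemma C_fst_snw: "x \<in> C \<Longrightarrow> y \<in> C \<Longrightarrow> fst x < fst y \<Longrightarrow> snw x y"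
  using chain_fst_snw[OF B C_chain] .

definition gR :: "int \<Rightarrow> nat" where "gR r = card {r' \<in> rres n C. r' < r}"

lemma gR_mono: "r1 \<in> rres n C \<Longrightarrow> r2 \<in> rres n C \<Longrightarrow> r1 < r2 \<Longrightarrow> gR r1 < gR r2"
  unfolding gR_def by (rule psubset_card_mono) (auto simp: rres_fin[OF n])

lemma gR_bound: "r \<in> rres n C \<Longrightarrow> gR r < m"
  unfolding gR_def by (rule psubset_card_mono) (auto simp: rres_fin[OF n])

lemma gR_image: "gR ` rres n C = {0..<m}"
proof -
  have inj: "inj_on gR (rres n C)"
  proof (rule inj_onI)
    fix x y assume xy: "x \<in> rres n C" "y \<in> rres n C" "gR x = gR y"
    show "x = y"
    proof (rule ccontr)
      assume "x \<noteq> y"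
      hence "x < y \<or> y < x" by auto
      thus False using gR_mono[OF xy(1,2)] gR_mono[OF xy(2,1)] xy(3) by auto
    qed
  qed
  have "gR ` rres n C \<subseteq> {0..<m}" using gR_bound by auto
  moreover have "card (gR ` rres n C) = card {0..<m}" using card_image[OF inj] by simp
  ultimately show ?thesis by (simp add: card_subset_eq)
qed

definition f0 :: "int \<times> int \<Rightarrow> int" where
  "f0 c = int m * (fst c div n) + int (gR (fst c mod n))"

lemma res_in: "c \<in> C \<Longrightarrow> fst c mod n \<in> rres n C" by (auto simp: rres_def)

lemma f0_mono: assumes "x \<in> C" "y \<in> C" "fst x < fst y" shows "f0 x < f0 y"
proof -
  let ?dx = "fst x div n" and ?dy = "fst y div n" and ?rx = "fst x mod n" and ?ry = "fst y mod n"
  have rx: "?rx \<in> rres n C" and ry: "?ry \<in> rres n C" using res_in assms by auto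
  have "?dx \<le> ?dy" using assms(3) n by (simp add: zdiv_mono1)
  then consider "?dx = ?dy" | "?dx < ?dy" by linarith
  thus ?thesis
  proof cases
    case 1
    have "fst x = ?dx * n + ?rx" "fst y = ?dy * n + ?ry" by simp_all
    hence "fst x = ?dx * n + ?rx" "fst y = ?dx * n + ?ry" using 1 by simp_all
    hence "?rx < ?ry" using assms(3) by linarith
    hence "gR ?rx < gR ?ry" using gR_mono rx ry by blast
    thus ?thesis unfolding f0_def using 1 by simp
  next
    case 2
    have "int (gR ?rx) < int m" using gR_bound[OF rx] by simp
    hence "int m * ?dx + int (gR ?rx) < int m * (?dx + 1)" by (simp add: algebra_simps)
    also have "\<dots> \<le> int m * ?dy" using 2 by (intro mult_left_mono) auto
    also have "\<dots> \<le> int m * ?dy + int (gR ?ry)" by simp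
    finally show ?thesis unfolding f0_def .
  qed
qed

lemma f0_surj: "\<exists>c\<in>C. f0 c = z"
proof -
  define a where "a = z div int m"
  define i where "i = z mod int m"
  have i: "0 \<le> i" "i < int m" using m_pos unfolding i_def by simp_all
  hence "nat i \<in> gR ` rres n C" using gR_image by auto
  then obtain r where r: "r \<in> rres n C" "gR r = nat i" by auto
  then obtain e where e: "e \<in> C" "fst e mod n = r" by (auto simp: rres_def)
  define c where "c = transl n (a - fst e div n) e"
  have "c \<in> C" using C_inv e(1) unfolding c_def by blast
  have h: "fst e div n * n + fst e mod n = fst e" by (rule div_mult_mod_eq)
  have "fst c = fst e + a * n - fst e div n * n" unfolding c_def by (simp add: algebra_simps)
  hence fc: "fst c = r + a * n" using h e(2) by linarith
  have r0: "0 \<le> r" "r < n" using e(2) n by auto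
  have "fst c div n = a" using fc r0 n by simp
  moreover have "fst c mod n = r" using fc r0 n by simp
  ultimately have "f0 c = int m * a + i" unfolding f0_def using r(2) i by simp
  also have "\<dots> = z" unfolding a_def i_def by simp
  finally show ?thesis using \<open>c \<in> C\<close> by blast
qed

lemma num_exists: "\<exists>g. bij_betw g C (UNIV :: int set) \<and> (\<forall>x\<in>C. \<forall>y\<in>C. snw x y \<longrightarrow> g x < g y)"
proof (intro exI conjI)
  show "\<forall>x\<in>C. \<forall>y\<in>C. snw x y \<longrightarrow> f0 x < f0 y" using f0_mono by (auto simp: snw_def)
  show "bij_betw f0 C UNIV" unfolding bij_betw_def
  proof
    show "inj_on f0 C"
    proof (rule inj_onI)
      fix x y assume xy: "x \<in> C" "y \<in> C" "f0 x = f0 y"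
      have "\<not> fst x < fst y" using f0_mono xy by fastforce
      moreover have "\<not> fst y < fst x" using f0_mono xy by fastforce
      ultimately have "fst x = fst y" by simp
      moreover have "x \<in> B" "y \<in> B" using xy C_sub by auto
      ultimately show "x = y" using B_fst by blast
    qed
    show "f0 ` C = UNIV"
    proof (rule set_eqI)
      fix z obtain c where "c \<in> C" "f0 c = z" using f0_surj by blast
      thus "z \<in> f0 ` C \<longleftrightarrow> z \<in> UNIV" by blast
    qed
  qed
qed

lemma f_props: "bij_betw f C (UNIV :: int set) \<and> (\<forall>x\<in>C. \<forall>y\<in>C. snw x y \<longrightarrow> f x < f y)"
  unfolding chan_num_def by (rule someI_ex[OF num_exists])

lemma f_mono: "x \<in> C \<Longrightarrow> y \<in> C \<Longrightarrow> fst x < fst y \<Longrightarrow> f x < f y"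
  using f_props C_fst_snw by blast

lemma f_surj: "\<exists>c\<in>C. f c = v"
  using f_props unfolding bij_betw_def by (metis UNIV_I imageE)

lemma f_mono_rev: assumes "x \<in> C" "y \<in> C" "f x < f y" shows "fst x < fst y"
proof (rule ccontr)
  assume "\<not> fst x < fst y"
  then consider "fst y < fst x" | "fst x = fst y" by linarith
  thus False
  proof cases
    case 1 thus False using f_mono assms by fastforce
  next
    case 2 hence "x = y" using assms C_sub B_fst by blast
    thus False using assms by simp
  qed
qed

lemma f_shift1: assumes c: "c \<in> C" shows "f (transl n 1 c) = f c + int m"
proof -
  define c' where "c' = transl n 1 c"
  have c': "c' \<in> C" using C_inv c unfolding c'_def by blast
  have fc': "fst c' = fst c + n" unfolding c'_def by simp
  define W where "W = {z \<in> C. fst c < fst z \<and> fst z \<le> fst c'}"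
  have lt: "f c < f c'" using f_mono c c' fc' n by simp
  have img: "f ` W = {f c<..f c'}"
  proof (intro set_eqI iffI)
    fix v assume "v \<in> f ` W"
    then obtain z where z: "z \<in> W" "v = f z" by auto
    have "f c < f z" using f_mono c z unfolding W_def by blast
    moreover have "f z \<le> f c'"
    proof (cases "fst z = fst c'")
      case True hence "z = c'" using z c' C_sub B_fst unfolding W_def by blast
      thus ?thesis by simp
    next
      case False thus ?thesis using f_mono c' z unfolding W_def by fastforce
    qed
    ultimately show "v \<in> {f c<..f c'}" using z by simp
  next
    fix v assume v: "v \<in> {f c<..f c'}"
    obtain z where z: "z \<in> C" "f z = v" using f_surj by blast
    have "fst c < fst z" using f_mono_rev c z v by simp
    moreover have "fst z \<le> fst c'"
    proof (rule ccontr)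
      assume "\<not> fst z \<le> fst c'"
      hence "fst c' < fst z" by simp
      hence "f c' < f z" using f_mono[OF c' z(1)] by simp
      thus False using v z by simp
    qed
    ultimately show "v \<in> f ` W" using z unfolding W_def by blast
  qed
  have injW: "inj_on f W"
    using f_props unfolding bij_betw_def W_def by (auto intro: inj_on_subset)
  have "card W = nat (f c' - f c)" using card_image[OF injW] img by simp
  moreover have "card W = m"
  proof -
    have inj2: "inj_on (\<lambda>z. fst z mod n) W"
    proof (rule inj_onI)
      fix x y assume xy: "x \<in> W" "y \<in> W" "fst x mod n = fst y mod n"
      have "fst x = fst y"
      proof -
        have "n dvd fst x - fst y" using xy(3) by (simp add: mod_eq_dvd_iff)
        then obtain t where t: "fst x - fst y = n * t" by (auto simp: dvd_def)
        have "\<bar>fst x - fst y\<bar> < n" using xy fc' unfolding W_def by auto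
        hence "\<bar>n * t\<bar> < n * 1" using t by simp
        hence "\<bar>t\<bar> < 1" using n by (simp add: abs_mult)
        thus ?thesis using t by simp
      qed
      thus "x = y" using xy C_sub B_fst unfolding W_def by blast
    qed
    have "(\<lambda>z. fst z mod n) ` W = rres n C"
    proof (intro set_eqI iffI)
      fix r assume "r \<in> (\<lambda>z. fst z mod n) ` W" thus "r \<in> rres n C" unfolding W_def rres_def by auto
    next
      fix r assume "r \<in> rres n C"
      then obtain e where e: "e \<in> C" "r = fst e mod n" by (auto simp: rres_def)
      define k where "k = (fst c - fst e) div n + 1"
      define z where "z = transl n k e"
      have "z \<in> C" using C_inv e unfolding z_def by blast
      have fz: "fst z = fst e + ((fst c - fst e) div n) * n + n" unfolding z_def k_def by (simp add: algebra_simps)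
      have h1: "((fst c - fst e) div n) * n + (fst c - fst e) mod n = fst c - fst e" by (rule div_mult_mod_eq)
      have h2: "(fst c - fst e) mod n < n" "0 \<le> (fst c - fst e) mod n" using n by simp_all
      have "((fst c - fst e) div n) * n \<le> fst c - fst e" using h1 h2 by linarith
      moreover have "fst c - fst e < ((fst c - fst e) div n) * n + n" using h1 h2 by linarith
      ultimately have "fst c < fst z" "fst z \<le> fst c'" using fz fc' by linarith+
      moreover have "fst z mod n = r" using e unfolding z_def by simp
      ultimately show "r \<in> (\<lambda>z. fst z mod n) ` W" using \<open>z \<in> C\<close> unfolding W_def by force
    qed
    thus ?thesis using card_image[OF inj2] by simp
  qed
  ultimately show ?thesis using lt unfolding c'_def by linarith
qed

lemma f_shift: assumes c: "c \<in> C" shows "f (transl n k c) = f c + k * int m"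
proof (rule int_cases_nat[where k=k])
  fix j :: nat
  show "f (transl n (int j) c) = f c + int j * int m"
  proof (induction j)
    case 0 thus ?case by simp
  next
    case (Suc j)
    have e: "transl n 1 (transl n (int j) c) = transl n (int (Suc j)) c" by simp
    have "f (transl n 1 (transl n (int j) c)) = f (transl n (int j) c) + int m"
      using f_shift1 C_inv c by blast
    hence "f (transl n (int (Suc j)) c) = f (transl n (int j) c) + int m" unfolding e .
    thus ?case using Suc by (simp add: algebra_simps)
  qed
next
  fix j :: nat
  show "f (transl n (- int j) c) = f c + - int j * int m"
  proof (induction j)
    case 0 thus ?case by simp
  next
    case (Suc j)
    have e: "transl n 1 (transl n (- int (Suc j)) c) = transl n (- int j) c" by simp
    have "f (transl n 1 (transl n (- int (Suc j)) c)) = f (transl n (- int (Suc j)) c) + int m"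
      using f_shift1 C_inv c by blast
    hence "f (transl n (- int j) c) = f (transl n (- int (Suc j)) c) + int m" unfolding e .
    thus ?case using Suc by (simp add: algebra_simps)
  qed
qed

end


definition nwl :: "(int \<times> int) list \<Rightarrow> bool" where
  "nwl bs \<longleftrightarrow> (\<forall>t. Suc t < length bs \<longrightarrow> snw (bs ! Suc t) (bs ! t))"

lemma snw_trans: "snw a b \<Longrightarrow> snw b c \<Longrightarrow> snw a c" by (auto simp: snw_def)
lemma snw_nw: "snw a b \<Longrightarrow> nw a b" by (auto simp: snw_def nw_def)
lemma nw_trans: "nw a b \<Longrightarrow> nw b c \<Longrightarrow> nw a c" by (auto simp: nw_def)
lemma nw_refl: "nw a a" by (auto simp: nw_def)

lemma nwl_snw: assumes "nwl bs" "j < length bs" "i < j" shows "snw (bs ! j) (bs ! i)"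
  using assms(2,3)
proof (induction j)
  case 0 thus ?case by simp
next
  case (Suc j)
  have s: "snw (bs ! Suc j) (bs ! j)" using assms(1) Suc.prems by (simp add: nwl_def)
  show ?case
  proof (cases "i = j")
    case True thus ?thesis using s by simp
  next
    case False
    hence "snw (bs ! j) (bs ! i)" using Suc by simp
    thus ?thesis using s snw_trans by blast
  qed
qed

lemma nwl_range: assumes "nwl bs" "bs \<noteq> []" "y \<in> set bs" shows "nw (last bs) y" "nw y (hd bs)"
proof -
  obtain i where i: "i < length bs" "y = bs ! i" using assms(3) by (auto simp: in_set_conv_nth)
  have l: "last bs = bs ! (length bs - 1)" using assms(2) by (simp add: last_conv_nth)
  have h: "hd bs = bs ! 0" using assms(2) by (simp add: hd_conv_nth)
  show "nw (last bs) y"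
  proof (cases "i = length bs - 1")
    case True thus ?thesis using i l nw_refl by simp
  next
    case False thus ?thesis using nwl_snw[OF assms(1), of "length bs - 1" i] i l snw_nw by simp
  qed
  show "nw y (hd bs)"
  proof (cases "i = 0")
    case True thus ?thesis using i h nw_refl by simp
  next
    case False thus ?thesis using nwl_snw[OF assms(1), of i 0] i h snw_nw by simp
  qed
qed

lemma nwl_distinct: assumes "nwl bs" shows "distinct bs"
  unfolding distinct_conv_nth
proof (intro allI impI)
  fix i j assume "i < length bs" "j < length bs" "i \<noteq> j"
  then consider "i < j" | "j < i" by linarith
  thus "bs ! i \<noteq> bs ! j"
  proof cases
    case 1 thus ?thesis using nwl_snw[OF assms, of j i] \<open>j < length bs\<close> by (auto simp: snw_def)
  next
    case 2 thus ?thesis using nwl_snw[OF assms, of i j] \<open>i < length bs\<close> by (auto simp: snw_def)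
  qed
qed

lemma nwl_Cons: assumes "nwl bs" "bs \<noteq> []" "snw (hd bs) y" shows "nwl (y # bs)"
  unfolding nwl_def
proof (intro allI impI)
  fix t assume t: "Suc t < length (y # bs)"
  show "snw ((y # bs) ! Suc t) ((y # bs) ! t)"
  proof (cases t)
    case 0 thus ?thesis using assms by (simp add: hd_conv_nth)
  next
    case (Suc t') thus ?thesis using assms(1) t by (simp add: nwl_def)
  qed
qed

lemma nwl_tl: "nwl bs \<Longrightarrow> nwl (tl bs)"
  unfolding nwl_def by (cases bs) auto

lemma nwl_map: "nwl bs \<Longrightarrow> nwl (map (transl n k) bs)"
  unfolding nwl_def by simp

lemma mod_close_eq: fixes a b p :: int
  assumes "p > 0" "a mod p = b mod p" "\<bar>a - b\<bar> < p" shows "a = b"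
proof -
  have "p dvd a - b" using assms(2) by (simp add: mod_eq_dvd_iff)
  then obtain t where t: "a - b = p * t" by (auto simp: dvd_def)
  hence "\<bar>p * t\<bar> < p * 1" using assms(3) by simp
  hence "\<bar>t\<bar> < 1" using assms(1) by (simp add: abs_mult)
  thus ?thesis using t by simp
qed

lemma fin_chain_bound:
  assumes n: "n > 0" and Bn: "ppB n B" and C: "is_channel n B C" and q: "q \<ge> 1"
      and bs: "bs \<noteq> []" "set bs \<subseteq> B" "nwl bs" and cl: "snw (hd bs) (transl (q * n) 1 (last bs))"
  shows "int (length bs) \<le> q * int (card (rres n C))"
proof -
  define p where "p = q * n"
  have p: "p > 0" using n q unfolding p_def by (simp add: mult_pos_pos)
  have B: "ppB p B" using ppB_mult[OF Bn] p_def by simp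
  define X where "X = {transl p k y |k y. y \<in> set bs}"
  have rng: "nw (last bs) y" "nw y (hd bs)" if "y \<in> set bs" for y using nwl_range[OF bs(3,1) that] by auto
  have cl': "fst (hd bs) < fst (last bs) + p" "snd (hd bs) < snd (last bs) + p"
    using cl unfolding p_def by (auto simp: snw_def)
  have cmp: "nw y z \<or> nw z y" if yz: "y \<in> set bs" "z \<in> set bs" for y z
  proof -
    obtain i where i: "i < length bs" "y = bs ! i" using yz(1) by (auto simp: in_set_conv_nth)
    obtain j where j: "j < length bs" "z = bs ! j" using yz(2) by (auto simp: in_set_conv_nth)
    note ij = i(1) j(1) i(2) j(2)
    consider "i < j" | "j < i" | "i = j" by linarith
    thus ?thesis
    proof cases
      case 1 thus ?thesis using nwl_snw[OF bs(3), of j i] ij snw_nw by blast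
    next
      case 2 thus ?thesis using nwl_snw[OF bs(3), of i j] ij snw_nw by blast
    next
      case 3 thus ?thesis using ij nw_refl by simp
    qed
  qed
  have Xc: "chainset p B X" unfolding chainset_def
  proof (intro conjI ballI allI)
    show "X \<subseteq> B"
    proof
      fix b assume "b \<in> X"
      then obtain k y where "b = transl p k y" "y \<in> set bs" unfolding X_def by blast
      thus "b \<in> B" using bs(2) B unfolding ppB_def invp_def by blast
    qed
  next
    fix b k assume "b \<in> X"
    then obtain k' y where "b = transl p k' y" "y \<in> set bs" unfolding X_def by blast
    hence "transl p k b = transl p (k + k') y" by simp
    thus "transl p k b \<in> X" using \<open>y \<in> set bs\<close> unfolding X_def by blast
  next
    fix a b assume "a \<in> X" "b \<in> X"
    then obtain k y l z where a: "a = transl p k y" "y \<in> set bs" and b: "b = transl p l z" "z \<in> set bs"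
      unfolding X_def by blast
    have gen: "nw (transl p k y) (transl p l z)" if "k < l" "y \<in> set bs" "z \<in> set bs" for k l y z
    proof -
      have "(k + 1) * p \<le> l * p" using that p by (intro mult_right_mono) auto
      moreover have "fst y \<le> fst (hd bs)" "snd y \<le> snd (hd bs)" using rng(2)[OF that(2)] by (auto simp: nw_def)
      moreover have "fst (last bs) \<le> fst z" "snd (last bs) \<le> snd z" using rng(1)[OF that(3)] by (auto simp: nw_def)
      moreover have "k * p + p \<le> l * p" using \<open>(k + 1) * p \<le> l * p\<close> by (simp add: algebra_simps)
      ultimately have "fst y + k * p \<le> fst z + l * p" "snd y + k * p \<le> snd z + l * p" using cl' by linarith+
      thus ?thesis by (simp add: nw_def)
    qed
    consider "k < l" | "l < k" | "k = l" by linarith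
    thus "nw a b \<or> nw b a"
    proof cases
      case 1 thus ?thesis using gen a b by blast
    next
      case 2 thus ?thesis using gen a b by blast
    next
      case 3 thus ?thesis using cmp[OF a(2) b(2)] a b by simp
    qed
  qed
  have inj: "inj_on (\<lambda>y. fst y mod p) (set bs)"
  proof (rule inj_onI)
    fix y z assume yz: "y \<in> set bs" "z \<in> set bs" "fst y mod p = fst z mod p"
    have "fst (last bs) \<le> fst y" "fst y \<le> fst (hd bs)" "fst (last bs) \<le> fst z" "fst z \<le> fst (hd bs)"
      using rng[OF yz(1)] rng[OF yz(2)] by (auto simp: nw_def)
    hence "\<bar>fst y - fst z\<bar> < p" using cl' by auto
    hence "fst y = fst z" using mod_close_eq[OF p yz(3)] by simp
    moreover have "y \<in> B" "z \<in> B" using yz bs(2) by auto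
    moreover have "inj_on fst B" using B by (simp add: ppB_def)
    ultimately show "y = z" by (meson inj_onD)
  qed
  have "(\<lambda>y. fst y mod p) ` set bs \<subseteq> rres p X"
  proof
    fix r assume "r \<in> (\<lambda>y. fst y mod p) ` set bs"
    then obtain y where y: "y \<in> set bs" "r = fst y mod p" by auto
    have "transl p 0 y \<in> X" unfolding X_def using y(1) by blast
    hence "y \<in> X" by simp
    thus "r \<in> rres p X" using y(2) unfolding rres_def by blast
  qed
  hence "card ((\<lambda>y. fst y mod p) ` set bs) \<le> card (rres p X)" using rres_fin[OF p] by (simp add: card_mono)
  hence "length bs \<le> card (rres p X)" using card_image[OF inj] distinct_card[OF nwl_distinct[OF bs(3)]] by simp
  also have "\<dots> \<le> nat q * card (rres n C)" using dens_main[OF n q Bn C] Xc unfolding p_def by simp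
  finally have "int (length bs) \<le> int (nat q * card (rres n C))" by linarith
  moreover have "int (nat q * card (rres n C)) = q * int (card (rres n C))" using q by simp
  ultimately show ?thesis by linarith
qed

context amb
begin

definition Sset :: "int \<times> int \<Rightarrow> int set" where
  "Sset x = {f (last bs) + int (length bs) - 1 | bs. bs \<noteq> [] \<and> hd bs = x \<and> set bs \<subseteq> B \<and> last bs \<in> C \<and> nwl bs}"

lemma d_eq: "dval n B x = Sup (Sset x)"
  unfolding dval_def Sset_def nwl_def by simp

lemma Sset_ne: assumes x: "x \<in> B" shows "Sset x \<noteq> {}"
proof -
  obtain c0 where c0: "c0 \<in> C" using C_ne by auto
  define k where "k = - (\<bar>fst x - fst c0\<bar> + \<bar>snd x - snd c0\<bar> + 1)"
  define c where "c = transl n k c0"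
  have cC: "c \<in> C" using C_inv c0 unfolding c_def by blast
  have k: "k \<le> -1" unfolding k_def by simp
  have "k * n \<le> k" using mult_left_mono_neg[of 1 n k] k n by simp
  moreover have "- (fst x - fst c0) \<le> \<bar>fst x - fst c0\<bar>" "- (snd x - snd c0) \<le> \<bar>snd x - snd c0\<bar>"
    by simp_all
  moreover have "0 \<le> \<bar>fst x - fst c0\<bar>" "0 \<le> \<bar>snd x - snd c0\<bar>" by simp_all
  ultimately have "fst c0 + k * n < fst x" "snd c0 + k * n < snd x" using k_def by linarith+
  hence "snw c x" unfolding c_def snw_def by simp
  hence w: "[x, c] \<noteq> [] \<and> hd [x, c] = x \<and> set [x, c] \<subseteq> B \<and> last [x, c] \<in> C \<and> nwl [x, c]"
    using x cC C_sub by (auto simp: nwl_def)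
  hence "f (last [x, c]) + int (length [x, c]) - 1 \<in> Sset x" unfolding Sset_def by blast
  thus ?thesis by auto
qed

definition E0 where "E0 = {e \<in> C. 0 \<le> fst e \<and> fst e < n}"

lemma E0_fin: "finite E0"
proof -
  have "inj_on fst E0"
  proof (rule inj_onI)
    fix x y assume "x \<in> E0" "y \<in> E0" "fst x = fst y"
    thus "x = y" using B_fst C_sub unfolding E0_def by blast
  qed
  moreover have "fst ` E0 \<subseteq> {0..<n}" unfolding E0_def by auto
  moreover have "finite (fst ` E0)" using \<open>fst ` E0 \<subseteq> {0..<n}\<close> finite_subset by blast
  ultimately show ?thesis using finite_imageD by blast
qed

definition gb :: "int \<times> int \<Rightarrow> int \<times> int \<Rightarrow> int" where
  "gb x e = f e + (max (fst x - fst e) (snd x - snd e) div n + 1) * int m - 1"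

lemma Sset_bound: assumes x: "x \<in> B" and v: "v \<in> Sset x" shows "\<exists>e\<in>E0. v \<le> gb x e"
proof -
  obtain bs where bs: "bs \<noteq> []" "hd bs = x" "set bs \<subseteq> B" "last bs \<in> C" "nwl bs"
    and v: "v = f (last bs) + int (length bs) - 1" using v unfolding Sset_def by blast
  define c where "c = last bs"
  define j where "j = fst c div n"
  define e where "e = transl n (- j) c"
  have cC: "c \<in> C" using bs c_def by simp
  have eC: "e \<in> C" using C_inv cC unfolding e_def by blast
  have fe: "fst e = fst c mod n" unfolding e_def j_def by (simp add: algebra_simps minus_div_mult_eq_mod)
  have e0: "e \<in> E0" using eC fe n unfolding E0_def by simp
  have ce: "c = transl n j e" unfolding e_def by simp
  have fc: "f c = f e + j * int m" using f_shift[OF eC, of j] ce by simp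
  have cx: "nw c x" using nwl_range(2)[OF bs(5,1)] bs(1,2) unfolding c_def by simp
  define D where "D = max (fst x - fst e) (snd x - snd e)"
  have sc: "snd c = snd e + j * n" "fst c = fst e + j * n" using ce by simp_all
  have "j * n \<le> D" using cx sc unfolding D_def nw_def by auto
  hence "(j * n) div n \<le> D div n" using n by (rule zdiv_mono1)
  moreover have "(j * n) div n = j" using n by simp
  ultimately have jD: "j \<le> D div n" by simp
  define q where "q = D div n - j + 1"
  have q: "q \<ge> 1" using jD unfolding q_def by simp
  have dm: "D div n * n + D mod n = D" "D mod n < n" using n by simp_all
  have qn: "q * n = D div n * n - j * n + n" unfolding q_def by (simp add: algebra_simps)
  have "fst x - fst e \<le> D" "snd x - snd e \<le> D" unfolding D_def by simp_all
  hence h1: "fst x < fst e + j * n + q * n" "snd x < snd e + j * n + q * n" using qn dm by linarith+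
  hence "snw (hd bs) (transl (q * n) 1 (last bs))" using bs(2) sc unfolding c_def[symmetric]
    by (simp add: snw_def)
  hence len: "int (length bs) \<le> q * int m" using fin_chain_bound[OF n B C_ch q bs(1,3,5)] by simp
  have v2: "v = f e + j * int m + int (length bs) - 1" using v fc unfolding c_def by linarith
  have g: "gb x e = f e + (D div n + 1) * int m - 1" unfolding gb_def D_def by simp
  have jq: "j * int m + q * int m = (D div n + 1) * int m" unfolding q_def by (simp add: algebra_simps)
  have "v \<le> gb x e" using v2 g jq len by linarith
  thus ?thesis using e0 by blast
qed

lemma Sset_bdd: assumes x: "x \<in> B" shows "bdd_above (Sset x)"
proof -
  have "\<forall>v\<in>Sset x. v \<le> Max (gb x ` E0)"
  proof
    fix v assume "v \<in> Sset x"
    then obtain e where "e \<in> E0" "v \<le> gb x e" using Sset_bound x by blast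
    moreover have "gb x e \<le> Max (gb x ` E0)" using E0_fin \<open>e \<in> E0\<close> by simp
    ultimately show "v \<le> Max (gb x ` E0)" by simp
  qed
  thus ?thesis by (auto simp: bdd_above_def)
qed

abbreviation "d \<equiv> dval n B"

lemma d_mem: "x \<in> B \<Longrightarrow> d x \<in> Sset x"
  using Sup_int_mem[OF Sset_ne Sset_bdd] d_eq by simp

lemma d_upper: "x \<in> B \<Longrightarrow> v \<in> Sset x \<Longrightarrow> v \<le> d x"
  using cSup_upper[OF _ Sset_bdd] d_eq by simp

lemma d_wit: assumes "x \<in> B"
  obtains bs where "bs \<noteq> []" "hd bs = x" "set bs \<subseteq> B" "last bs \<in> C" "nwl bs"
    "d x = f (last bs) + int (length bs) - 1"
  using d_mem[OF assms] unfolding Sset_def by blast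

lemma K1: assumes x: "x \<in> B" and y: "y \<in> B" and s: "snw x y" shows "d x + 1 \<le> d y"
proof -
  obtain bs where bs: "bs \<noteq> []" "hd bs = x" "set bs \<subseteq> B" "last bs \<in> C" "nwl bs"
    "d x = f (last bs) + int (length bs) - 1" using d_wit[OF x] by blast
  have c: "y # bs \<noteq> []" "hd (y # bs) = y" "set (y # bs) \<subseteq> B" "last (y # bs) \<in> C" "nwl (y # bs)"
    using nwl_Cons[OF bs(5,1)] s bs y by auto
  hence "f (last (y # bs)) + int (length (y # bs)) - 1 \<in> Sset y"
    unfolding Sset_def by blast
  hence "f (last bs) + int (length (y # bs)) - 1 \<in> Sset y" using bs(1) by simp
  hence "f (last bs) + int (length bs) \<le> d y" using d_upper[OF y] by simp
  thus ?thesis using bs(6) by simp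
qed

lemma K2a: assumes x: "x \<in> B" shows "\<exists>z\<in>B. snw z x \<and> d z = d x - 1"
proof -
  obtain bs where bs: "bs \<noteq> []" "hd bs = x" "set bs \<subseteq> B" "last bs \<in> C" "nwl bs"
    "d x = f (last bs) + int (length bs) - 1" using d_wit[OF x] by blast
  show ?thesis
  proof (cases "length bs \<ge> 2")
    case True
    define z where "z = bs ! 1"
    have tne: "tl bs \<noteq> []" using True by (cases bs) auto
    have zt: "hd (tl bs) = z" unfolding z_def using tne by (cases bs) (auto simp: hd_conv_nth)
    have zB: "z \<in> B" using bs(3) True nth_mem[of 1 bs] unfolding z_def by auto
    have sz: "snw z x" using nwl_snw[OF bs(5), of 1 0] True bs(1,2) unfolding z_def by (simp add: hd_conv_nth)
    have lt: "last (tl bs) = last bs" using tne by (simp add: last_tl)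
    have st: "set (tl bs) \<subseteq> B" using bs(3) by (cases bs) auto
    have w: "tl bs \<noteq> [] \<and> hd (tl bs) = z \<and> set (tl bs) \<subseteq> B \<and> last (tl bs) \<in> C \<and> nwl (tl bs)"
      using tne zt st lt bs(4) nwl_tl[OF bs(5)] by simp
    hence "f (last (tl bs)) + int (length (tl bs)) - 1 \<in> Sset z"
      unfolding Sset_def by blast
    hence "f (last (tl bs)) + int (length (tl bs)) - 1 \<le> d z" by (rule d_upper[OF zB])
    hence "f (last bs) + int (length (tl bs)) - 1 \<le> d z" unfolding lt .
    moreover have "int (length (tl bs)) = int (length bs) - 1" using bs(1) by (cases bs) auto
    ultimately have "d x - 1 \<le> d z" using bs(6) by linarith
    moreover have "d z + 1 \<le> d x" using K1[OF zB x sz] .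
    ultimately have "d z = d x - 1" by linarith
    thus ?thesis using zB sz by blast
  next
    case False
    have "length bs \<noteq> 0" using bs(1) by simp
    hence l1: "length bs = 1" using False by linarith
    then obtain a where "bs = [a]" by (cases bs) auto
    hence bsx: "bs = [x]" using bs(2) by simp
    hence xC: "x \<in> C" using bs(4) by simp
    have dx: "d x = f x" using bs(6) bsx by simp
    obtain e where e: "e \<in> C" "f e = f x - 1" using f_surj by blast
    have "f e < f x" using e by simp
    hence "fst e < fst x" using f_mono_rev[OF e(1) xC] by blast
    hence se: "snw e x" using C_fst_snw e(1) xC by blast
    have eB: "e \<in> B" using e C_sub by auto
    have w: "[e] \<noteq> [] \<and> hd [e] = e \<and> set [e] \<subseteq> B \<and> last [e] \<in> C \<and> nwl [e]"
      using eB e(1) by (simp add: nwl_def)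
    hence "f (last [e]) + int (length [e]) - 1 \<in> Sset e" unfolding Sset_def by blast
    hence "f e \<le> d e" using d_upper[OF eB] by simp
    moreover have "d e + 1 \<le> d x" using K1[OF eB x se] .
    ultimately have "d e = d x - 1" using dx e(2) by linarith
    thus ?thesis using eB se by blast
  qed
qed

lemma K2: assumes x: "x \<in> B" and t: "t < d x" shows "\<exists>z\<in>B. snw z x \<and> d z = t"
proof -
  have "\<forall>x\<in>B. d x = t + 1 + int k \<longrightarrow> (\<exists>z\<in>B. snw z x \<and> d z = t)" for k
  proof (induction k)
    case 0 show ?case
    proof (intro ballI impI)
      fix x assume "x \<in> B" "d x = t + 1 + int 0"
      then obtain z where "z \<in> B" "snw z x" "d z = d x - 1" using K2a by blast
      thus "\<exists>z\<in>B. snw z x \<and> d z = t" using \<open>d x = t + 1 + int 0\<close> by auto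
    qed
  next
    case (Suc k)
    show ?case
    proof (intro ballI impI)
      fix x assume x: "x \<in> B" "d x = t + 1 + int (Suc k)"
      obtain z1 where z1: "z1 \<in> B" "snw z1 x" "d z1 = d x - 1" using K2a[OF x(1)] by blast
      hence "d z1 = t + 1 + int k" using x by simp
      then obtain z where "z \<in> B" "snw z z1" "d z = t" using Suc z1 by blast
      thus "\<exists>z\<in>B. snw z x \<and> d z = t" using z1 snw_trans by blast
    qed
  qed
  moreover have "d x = t + 1 + int (nat (d x - t - 1))" using t by simp
  ultimately show ?thesis using x by blast
qed

lemma d_shift_ge: assumes x: "x \<in> B" shows "d x + k * int m \<le> d (transl n k x)"
proof -
  obtain bs where bs: "bs \<noteq> []" "hd bs = x" "set bs \<subseteq> B" "last bs \<in> C" "nwl bs"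
    "d x = f (last bs) + int (length bs) - 1" using d_wit[OF x] by blast
  let ?bs = "map (transl n k) bs"
  have "?bs \<noteq> []" "hd ?bs = transl n k x" "set ?bs \<subseteq> B" "last ?bs \<in> C" "nwl ?bs"
    using bs B_inv C_inv nwl_map by (auto simp: hd_map last_map)
  hence "f (last ?bs) + int (length ?bs) - 1 \<in> Sset (transl n k x)" unfolding Sset_def by blast
  moreover have "f (last ?bs) = f (last bs) + k * int m" using f_shift[OF bs(4)] bs(1) by (simp add: last_map)
  ultimately have "f (last bs) + k * int m + int (length bs) - 1 \<le> d (transl n k x)"
    using d_upper[OF B_inv[OF x]] by simp
  thus ?thesis using bs(6) by simp
qed

lemma d_shift: assumes x: "x \<in> B" shows "d (transl n k x) = d x + k * int m"
proof -
  have "d (transl n k x) + (-k) * int m \<le> d (transl n (-k) (transl n k x))"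
    using d_shift_ge[OF B_inv[OF x]] .
  hence "d (transl n k x) - k * int m \<le> d x" by simp
  thus ?thesis using d_shift_ge[OF x, of k] by simp
qed

end


lemma same_res_transl_snd:
  assumes "p > 0" "ppB p B" "x \<in> B" "y \<in> B" "snd x mod p = snd y mod p"
  shows "\<exists>k. y = transl p k x"
proof -
  have d: "p dvd (snd y - snd x)" using assms(5)[symmetric] by (simp add: mod_eq_dvd_iff)
  define k where "k = (snd y - snd x) div p"
  have "snd y - snd x = k * p" using d unfolding k_def by simp
  hence "snd (transl p k x) = snd y" by simp
  moreover have "transl p k x \<in> B" using assms(2,3) by (auto simp: ppB_def invp_def)
  ultimately have "transl p k x = y" using assms(2,4) by (auto simp: ppB_def inj_on_def)
  thus ?thesis by auto
qed

definition nxt :: "int \<Rightarrow> (int \<times> int) set \<Rightarrow> int \<times> int \<Rightarrow> int \<times> int \<Rightarrow> bool" where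
  "nxt n B x y \<longleftrightarrow> (\<exists>t. x \<in> level n B t \<and> y \<in> level n B t \<and> fst x < fst y
      \<and> \<not> (\<exists>z\<in>level n B t. fst x < fst z \<and> fst z < fst y))"

lemma fw_char: "fw n B = {(fst y, snd x) | x y. nxt n B x y}"
  unfolding fw_def nxt_def by force

context amb
begin

lemma lev_iff: "x \<in> level n B t \<longleftrightarrow> x \<in> B \<and> d x = t" by (simp add: level_def)

lemma lev_anti: assumes "x \<in> level n B t" "y \<in> level n B t" "fst x < fst y" shows "snd y < snd x"
proof (rule ccontr)
  assume nl: "\<not> snd y < snd x"
  have xB: "x \<in> B" "y \<in> B" using assms lev_iff by auto
  have "x \<noteq> y" using assms(3) by auto
  hence "snd x \<noteq> snd y" using B_snd xB by blast
  hence "snw x y" using assms(3) nl by (auto simp: snw_def)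
  hence "d x + 1 \<le> d y" using K1 xB by blast
  thus False using assms lev_iff by simp
qed

lemma lev_anti_le: assumes "x \<in> level n B t" "y \<in> level n B t" "fst x \<le> fst y" shows "snd y \<le> snd x"
  using lev_anti[OF assms(1,2)] assms by (cases "fst x = fst y") (auto simp: lev_iff dest: B_fst)

lemma lev_anti_rev: assumes "x \<in> level n B t" "y \<in> level n B t" "snd y < snd x" shows "fst x < fst y"
proof (rule ccontr)
  assume "\<not> fst x < fst y"
  hence "fst y \<le> fst x" by simp
  hence "snd x \<le> snd y" using lev_anti_le assms by blast
  thus False using assms by simp
qed

lemma lev_shift: "x \<in> level n B t \<Longrightarrow> transl n k x \<in> level n B (t + k * int m)"
  using d_shift B_inv by (auto simp: lev_iff)

lemma lev_fin: "finite (level n B t)"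
proof -
  have "inj_on (\<lambda>x. fst x mod n) (level n B t)"
  proof (rule inj_onI)
    fix x y assume xy: "x \<in> level n B t" "y \<in> level n B t" "fst x mod n = fst y mod n"
    then obtain k where k: "y = transl n k x" using same_res_transl[OF n B] lev_iff by blast
    hence "d y = d x + k * int m" using d_shift xy lev_iff by blast
    hence "k * int m = 0" using xy lev_iff by simp
    hence "k = 0" using m_pos by simp
    thus "x = y" using k by simp
  qed
  moreover have "(\<lambda>x. fst x mod n) ` level n B t \<subseteq> {0..<n}" using n by auto
  hence "finite ((\<lambda>x. fst x mod n) ` level n B t)" using finite_subset by blast
  ultimately show ?thesis using finite_imageD by blast
qed

definition hs :: "int \<times> int \<Rightarrow> bool" where "hs x \<longleftrightarrow> (\<exists>z\<in>level n B (d x). fst x < fst z)"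
definition hp :: "int \<times> int \<Rightarrow> bool" where "hp y \<longleftrightarrow> (\<exists>z\<in>level n B (d y). fst z < fst y)"

lemma nxt_props: assumes "nxt n B x y"
  shows "x \<in> B" "y \<in> B" "d y = d x" "fst x < fst y" "snd y < snd x"
    "\<And>z. z \<in> level n B (d x) \<Longrightarrow> fst x < fst z \<Longrightarrow> fst y \<le> fst z"
    "\<And>z. z \<in> level n B (d x) \<Longrightarrow> fst z < fst y \<Longrightarrow> fst z \<le> fst x"
proof -
  obtain t where t: "x \<in> level n B t" "y \<in> level n B t" "fst x < fst y"
    "\<not> (\<exists>z\<in>level n B t. fst x < fst z \<and> fst z < fst y)" using assms unfolding nxt_def by blast
  show "x \<in> B" "y \<in> B" "d y = d x" "fst x < fst y" using t lev_iff by auto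
  show "snd y < snd x" using lev_anti t by blast
  have dt: "d x = t" using t lev_iff by simp
  show "fst y \<le> fst z" if "z \<in> level n B (d x)" "fst x < fst z" for z
  proof (rule ccontr)
    assume "\<not> fst y \<le> fst z"
    hence "fst z < fst y" by simp
    thus False using t(4) that dt by blast
  qed
  show "fst z \<le> fst x" if "z \<in> level n B (d x)" "fst z < fst y" for z
  proof (rule ccontr)
    assume "\<not> fst z \<le> fst x"
    hence "fst x < fst z" by simp
    thus False using t(4) that dt by blast
  qed
qed

lemma nxt_ex: assumes x: "x \<in> B" and h: "hs x" shows "\<exists>y. nxt n B x y"
proof -
  let ?S = "{z \<in> level n B (d x). fst x < fst z}"
  have fin: "finite (fst ` ?S)" using lev_fin by simp
  have ne: "fst ` ?S \<noteq> {}" using h unfolding hs_def by blast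
  obtain y where y: "y \<in> ?S" "fst y = Min (fst ` ?S)" using Min_in[OF fin ne] by auto
  have le: "\<forall>z\<in>?S. fst y \<le> fst z" using y fin by simp
  have "x \<in> level n B (d x)" using x lev_iff by simp
  moreover have "y \<in> level n B (d x)" "fst x < fst y" using y by auto
  moreover have "\<not> (\<exists>z\<in>level n B (d x). fst x < fst z \<and> fst z < fst y)" using le by force
  ultimately have "nxt n B x y" unfolding nxt_def by blast
  thus ?thesis by blast
qed

lemma nxt_ex_pred: assumes y: "y \<in> B" and h: "hp y" shows "\<exists>x. nxt n B x y"
proof -
  let ?S = "{z \<in> level n B (d y). fst z < fst y}"
  have fin: "finite (fst ` ?S)" using lev_fin by simp
  have ne: "fst ` ?S \<noteq> {}" using h unfolding hp_def by blast
  obtain x where x: "x \<in> ?S" "fst x = Max (fst ` ?S)" using Max_in[OF fin ne] by auto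
  have le: "\<forall>z\<in>?S. fst z \<le> fst x" using x fin by simp
  have "y \<in> level n B (d y)" using y lev_iff by simp
  moreover have "x \<in> level n B (d y)" "fst x < fst y" using x by auto
  moreover have "\<not> (\<exists>z\<in>level n B (d y). fst x < fst z \<and> fst z < fst y)" using le by force
  ultimately have "nxt n B x y" unfolding nxt_def by blast
  thus ?thesis by blast
qed

lemma nxt_hs: assumes "nxt n B x y" shows "hs x"
proof -
  have "y \<in> level n B (d x)" using nxt_props[OF assms] lev_iff by simp
  thus ?thesis unfolding hs_def using nxt_props(4)[OF assms] by blast
qed

lemma nxt_hp: assumes "nxt n B x y" shows "hp y"
proof -
  have "x \<in> level n B (d y)" using nxt_props[OF assms] lev_iff by simp
  thus ?thesis unfolding hp_def using nxt_props(4)[OF assms] by blast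
qed

lemma nxt_unique: assumes "nxt n B x y" "nxt n B x y'" shows "y = y'"
proof -
  have "y' \<in> level n B (d x)" "y \<in> level n B (d x)" using nxt_props[OF assms(2)] nxt_props[OF assms(1)] lev_iff by auto
  hence "fst y \<le> fst y'" "fst y' \<le> fst y" using nxt_props[OF assms(1)] nxt_props[OF assms(2)] by auto
  hence "fst y = fst y'" by simp
  thus ?thesis using B_fst nxt_props(2)[OF assms(1)] nxt_props(2)[OF assms(2)] by blast
qed

lemma nxt_unique_pred: assumes "nxt n B x y" "nxt n B x' y" shows "x = x'"
proof -
  have dx: "d x = d x'" using nxt_props[OF assms(1)] nxt_props[OF assms(2)] by simp
  have "x' \<in> level n B (d x)" "x \<in> level n B (d x)" using nxt_props[OF assms(2)] nxt_props[OF assms(1)] dx lev_iff by auto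
  hence "fst x' \<le> fst x" "fst x \<le> fst x'" using nxt_props[OF assms(1)] nxt_props[OF assms(2)] dx by auto
  hence "fst x = fst x'" by simp
  thus ?thesis using B_fst nxt_props(1)[OF assms(1)] nxt_props(1)[OF assms(2)] by blast
qed

lemma nxt_transl: assumes "nxt n B x y" shows "nxt n B (transl n k x) (transl n k y)"
proof -
  obtain t where t: "x \<in> level n B t" "y \<in> level n B t" "fst x < fst y"
    "\<not> (\<exists>z\<in>level n B t. fst x < fst z \<and> fst z < fst y)" using assms unfolding nxt_def by blast
  have "transl n k x \<in> level n B (t + k * int m)" "transl n k y \<in> level n B (t + k * int m)"
    using lev_shift t by auto
  moreover have "fst (transl n k x) < fst (transl n k y)" using t by simp
  moreover have "\<not> (\<exists>z\<in>level n B (t + k * int m). fst (transl n k x) < fst z \<and> fst z < fst (transl n k y))"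
  proof
    assume "\<exists>z\<in>level n B (t + k * int m). fst (transl n k x) < fst z \<and> fst z < fst (transl n k y)"
    then obtain z where z: "z \<in> level n B (t + k * int m)" "fst (transl n k x) < fst z" "fst z < fst (transl n k y)"
      by blast
    have "transl n (-k) z \<in> level n B (t + k * int m + (-k) * int m)" using lev_shift z(1) by blast
    hence "transl n (-k) z \<in> level n B t" by simp
    moreover have "fst x < fst (transl n (-k) z)" "fst (transl n (-k) z) < fst y" using z by simp_all
    ultimately show False using t by blast
  qed
  ultimately show ?thesis unfolding nxt_def by blast
qed

lemma hs_transl: assumes x: "x \<in> B" "hs x" shows "hs (transl n k x)"
proof -
  obtain y where "nxt n B x y" using nxt_ex x by blast
  thus ?thesis using nxt_transl nxt_hs by blast
qed

lemma hp_transl: assumes y: "y \<in> B" "hp y" shows "hp (transl n k y)"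
proof -
  obtain x where "nxt n B x y" using nxt_ex_pred y by blast
  thus ?thesis using nxt_transl nxt_hp by blast
qed

lemma fw_pp: "ppB n (fw n B)"
  unfolding ppB_def invp_def
proof (intro conjI ballI allI)
  fix b k assume "b \<in> fw n B"
  then obtain x y where xy: "b = (fst y, snd x)" "nxt n B x y" unfolding fw_char by blast
  hence "nxt n B (transl n k x) (transl n k y)" using nxt_transl by blast
  moreover have "transl n k b = (fst (transl n k y), snd (transl n k x))" using xy by (simp add: transl_def)
  ultimately show "transl n k b \<in> fw n B" unfolding fw_char by blast
next
  show "inj_on fst (fw n B)"
  proof (rule inj_onI)
    fix a b assume "a \<in> fw n B" "b \<in> fw n B" "fst a = fst b"
    then obtain x y x' y' where h: "a = (fst y, snd x)" "nxt n B x y" "b = (fst y', snd x')" "nxt n B x' y'"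
      unfolding fw_char by blast
    have "fst y = fst y'" using h \<open>fst a = fst b\<close> by simp
    hence "y = y'" using B_fst nxt_props(2)[OF h(2)] nxt_props(2)[OF h(4)] by blast
    hence "x = x'" using nxt_unique_pred h by blast
    thus "a = b" using h \<open>y = y'\<close> by simp
  qed
next
  show "inj_on snd (fw n B)"
  proof (rule inj_onI)
    fix a b assume "a \<in> fw n B" "b \<in> fw n B" "snd a = snd b"
    then obtain x y x' y' where h: "a = (fst y, snd x)" "nxt n B x y" "b = (fst y', snd x')" "nxt n B x' y'"
      unfolding fw_char by blast
    have "snd x = snd x'" using h \<open>snd a = snd b\<close> by simp
    hence "x = x'" using B_snd nxt_props(1)[OF h(2)] nxt_props(1)[OF h(4)] by blast
    hence "y = y'" using nxt_unique h by blast
    thus "a = b" using h \<open>x = x'\<close> by simp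
  qed
qed

lemma bc_col: "(\<exists>i. (i, j) \<in> back_corners n B) \<longleftrightarrow> (\<exists>x\<in>B. snd x = j \<and> \<not> hs x)"
proof
  assume "\<exists>i. (i, j) \<in> back_corners n B"
  then obtain i t j0 i1 where h: "(i, j0) \<in> level n B t" "(i1, j) \<in> level n B t"
    "\<forall>b\<in>level n B t. i \<le> fst b \<and> fst b \<le> i1" unfolding back_corners_def by blast
  have xB: "(i1, j) \<in> B" "d (i1, j) = t" using h(2) lev_iff by auto
  have "\<not> hs (i1, j)" unfolding hs_def xB(2) using h(3) by fastforce
  moreover have "snd (i1, j) = j" by simp
  ultimately show "\<exists>x\<in>B. snd x = j \<and> \<not> hs x" using xB(1) by blast
next
  assume "\<exists>x\<in>B. snd x = j \<and> \<not> hs x"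
  then obtain x where x: "x \<in> B" "snd x = j" "\<not> hs x" by blast
  let ?L = "level n B (d x)"
  have xL: "x \<in> ?L" using x lev_iff by simp
  have fin: "finite (fst ` ?L)" using lev_fin by simp
  have ne: "fst ` ?L \<noteq> {}" using xL by blast
  obtain a where a: "a \<in> ?L" "fst a = Min (fst ` ?L)" using Min_in[OF fin ne] by auto
  have "\<forall>b\<in>?L. fst a \<le> fst b \<and> fst b \<le> fst x"
  proof
    fix b assume b: "b \<in> ?L"
    have "fst a \<le> fst b" using a fin b by simp
    moreover have "\<not> fst x < fst b" using x(3) b unfolding hs_def by blast
    ultimately show "fst a \<le> fst b \<and> fst b \<le> fst x" by simp
  qed
  moreover have "(fst a, snd a) \<in> ?L" "(fst x, snd x) \<in> ?L" using a(1) xL by simp_all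
  ultimately have "(fst a, snd x) \<in> back_corners n B" unfolding back_corners_def by blast
  thus "\<exists>i. (i, j) \<in> back_corners n B" using x by blast
qed

lemma bc_row: "(\<exists>j. (i, j) \<in> back_corners n B) \<longleftrightarrow> (\<exists>y\<in>B. fst y = i \<and> \<not> hp y)"
proof
  assume "\<exists>j. (i, j) \<in> back_corners n B"
  then obtain j t j0 i1 where h: "(i, j0) \<in> level n B t" "(i1, j) \<in> level n B t"
    "\<forall>b\<in>level n B t. i \<le> fst b \<and> fst b \<le> i1" unfolding back_corners_def by blast
  have xB: "(i, j0) \<in> B" "d (i, j0) = t" using h(1) lev_iff by auto
  have "\<not> hp (i, j0)" unfolding hp_def xB(2) using h(3) by fastforce
  moreover have "fst (i, j0) = i" by simp
  ultimately show "\<exists>y\<in>B. fst y = i \<and> \<not> hp y" using xB(1) by blast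
next
  assume "\<exists>y\<in>B. fst y = i \<and> \<not> hp y"
  then obtain x where x: "x \<in> B" "fst x = i" "\<not> hp x" by blast
  let ?L = "level n B (d x)"
  have xL: "x \<in> ?L" using x lev_iff by simp
  have fin: "finite (fst ` ?L)" using lev_fin by simp
  have ne: "fst ` ?L \<noteq> {}" using xL by blast
  obtain a where a: "a \<in> ?L" "fst a = Max (fst ` ?L)" using Max_in[OF fin ne] by auto
  have "\<forall>b\<in>?L. fst x \<le> fst b \<and> fst b \<le> fst a"
  proof
    fix b assume b: "b \<in> ?L"
    have "fst b \<le> fst a" using a fin b by simp
    moreover have "\<not> fst b < fst x" using x(3) b unfolding hp_def by blast
    ultimately show "fst x \<le> fst b \<and> fst b \<le> fst a" by simp
  qed
  moreover have "(fst a, snd a) \<in> ?L" "(fst x, snd x) \<in> ?L" using a(1) xL by simp_all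
  ultimately have "(fst x, snd a) \<in> back_corners n B" unfolding back_corners_def by blast
  thus "\<exists>j. (i, j) \<in> back_corners n B" using x by blast
qed

end


definition crs :: "int \<Rightarrow> (int \<times> int) set \<Rightarrow> int set" where "crs n X = (\<lambda>z. snd z mod n) ` X"
definition rrs :: "int \<Rightarrow> (int \<times> int) set \<Rightarrow> int set" where "rrs n X = (\<lambda>z. fst z mod n) ` X"
definition Pset :: "int \<Rightarrow> (int \<times> int) set \<Rightarrow> int set" where
  "Pset n X = {j mod n | i j. (i, j) \<in> back_corners n X}"
definition Qset :: "int \<Rightarrow> (int \<times> int) set \<Rightarrow> int set" where
  "Qset n X = {i mod n | i j. (i, j) \<in> back_corners n X}"

context amb
begin

lemma hs_transl_iff: assumes "x \<in> B" shows "hs (transl n k x) \<longleftrightarrow> hs x"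
proof
  assume "hs (transl n k x)"
  hence "hs (transl n (-k) (transl n k x))" using hs_transl B_inv assms by blast
  thus "hs x" by simp
qed (rule hs_transl[OF assms])

lemma hp_transl_iff: assumes "x \<in> B" shows "hp (transl n k x) \<longleftrightarrow> hp x"
proof
  assume "hp (transl n k x)"
  hence "hp (transl n (-k) (transl n k x))" using hp_transl B_inv assms by blast
  thus "hp x" by simp
qed (rule hp_transl[OF assms])

lemma Pset_eq: "Pset n B = crs n B - crs n (fw n B)"
proof (intro set_eqI iffI)
  fix r assume "r \<in> Pset n B"
  then obtain i j where ij: "r = j mod n" "(i, j) \<in> back_corners n B" unfolding Pset_def by blast
  then obtain x where x: "x \<in> B" "snd x = j" "\<not> hs x" using bc_col by blast
  have "r = snd x mod n" using x ij by simp
  hence "r \<in> crs n B" using x(1) unfolding crs_def by blast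
  moreover have "r \<notin> crs n (fw n B)"
  proof
    assume "r \<in> crs n (fw n B)"
    then obtain z where z: "z \<in> fw n B" "snd z mod n = r" unfolding crs_def by blast
    then obtain x' y where xy: "z = (fst y, snd x')" "nxt n B x' y" unfolding fw_char by blast
    have x'B: "x' \<in> B" using nxt_props(1)[OF xy(2)] .
    have "snd x mod n = snd x' mod n" using z xy x ij by simp
    then obtain k where "x' = transl n k x" using same_res_transl_snd[OF n B x(1) x'B] by blast
    hence "hs x" using nxt_hs[OF xy(2)] hs_transl_iff[OF x(1)] by simp
    thus False using x by simp
  qed
  ultimately show "r \<in> crs n B - crs n (fw n B)" by simp
next
  fix r assume r: "r \<in> crs n B - crs n (fw n B)"
  then obtain x where x: "x \<in> B" "snd x mod n = r" unfolding crs_def by blast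
  have "\<not> hs x"
  proof
    assume "hs x"
    then obtain y where "nxt n B x y" using nxt_ex x by blast
    hence "(fst y, snd x) \<in> fw n B" unfolding fw_char by blast
    moreover have "r = snd (fst y, snd x) mod n" using x by simp
    ultimately have "r \<in> crs n (fw n B)" unfolding crs_def by blast
    thus False using r by simp
  qed
  then obtain i where "(i, snd x) \<in> back_corners n B" using bc_col x by blast
  thus "r \<in> Pset n B" using x unfolding Pset_def by blast
qed

lemma Qset_eq: "Qset n B = rrs n B - rrs n (fw n B)"
proof (intro set_eqI iffI)
  fix r assume "r \<in> Qset n B"
  then obtain i j where ij: "r = i mod n" "(i, j) \<in> back_corners n B" unfolding Qset_def by blast
  then obtain x where x: "x \<in> B" "fst x = i" "\<not> hp x" using bc_row by blast
  have "r = fst x mod n" using x ij by simp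
  hence "r \<in> rrs n B" using x(1) unfolding rrs_def by blast
  moreover have "r \<notin> rrs n (fw n B)"
  proof
    assume "r \<in> rrs n (fw n B)"
    then obtain z where z: "z \<in> fw n B" "fst z mod n = r" unfolding rrs_def by blast
    then obtain x' y where xy: "z = (fst y, snd x')" "nxt n B x' y" unfolding fw_char by blast
    have yB: "y \<in> B" using nxt_props(2)[OF xy(2)] .
    have "fst x mod n = fst y mod n" using z xy x ij by simp
    then obtain k where "y = transl n k x" using same_res_transl[OF n B x(1) yB] by blast
    hence "hp x" using nxt_hp[OF xy(2)] hp_transl_iff[OF x(1)] by simp
    thus False using x by simp
  qed
  ultimately show "r \<in> rrs n B - rrs n (fw n B)" by simp
next
  fix r assume r: "r \<in> rrs n B - rrs n (fw n B)"
  then obtain x where x: "x \<in> B" "fst x mod n = r" unfolding rrs_def by blast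
  have "\<not> hp x"
  proof
    assume "hp x"
    then obtain y where "nxt n B y x" using nxt_ex_pred x by blast
    hence "(fst x, snd y) \<in> fw n B" unfolding fw_char by blast
    moreover have "r = fst (fst x, snd y) mod n" using x by simp
    ultimately have "r \<in> rrs n (fw n B)" unfolding rrs_def by blast
    thus False using r by simp
  qed
  then obtain j where "(fst x, j) \<in> back_corners n B" using bc_row x by blast
  thus "r \<in> Qset n B" using x unfolding Qset_def by blast
qed

lemma crs_fw_sub: "crs n (fw n B) \<subseteq> crs n B"
proof
  fix r assume "r \<in> crs n (fw n B)"
  then obtain z where z: "z \<in> fw n B" "r = snd z mod n" unfolding crs_def by blast
  then obtain x y where xy: "z = (fst y, snd x)" "nxt n B x y" unfolding fw_char by blast
  have "x \<in> B" using nxt_props(1)[OF xy(2)] .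
  moreover have "r = snd x mod n" using z xy by simp
  ultimately show "r \<in> crs n B" unfolding crs_def by blast
qed

lemma rrs_fw_sub: "rrs n (fw n B) \<subseteq> rrs n B"
proof
  fix r assume "r \<in> rrs n (fw n B)"
  then obtain z where z: "z \<in> fw n B" "r = fst z mod n" unfolding rrs_def by blast
  then obtain x y where xy: "z = (fst y, snd x)" "nxt n B x y" unfolding fw_char by blast
  have "y \<in> B" using nxt_props(2)[OF xy(2)] .
  moreover have "r = fst y mod n" using z xy by simp
  ultimately show "r \<in> rrs n B" unfolding rrs_def by blast
qed

lemma Pset_ne: "Pset n B \<noteq> {}"
proof -
  obtain x where x: "x \<in> B" using ne by blast
  let ?L = "level n B (d x)"
  have xL: "x \<in> ?L" using x lev_iff by simp
  have fin: "finite (fst ` ?L)" using lev_fin by simp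
  have ne': "fst ` ?L \<noteq> {}" using xL by blast
  obtain a where a: "a \<in> ?L" "fst a = Max (fst ` ?L)" using Max_in[OF fin ne'] by auto
  have aB: "a \<in> B" and da: "d a = d x" using a lev_iff by auto
  have "\<not> hs a"
  proof
    assume "hs a"
    then obtain z where z: "z \<in> level n B (d a)" "fst a < fst z" unfolding hs_def by blast
    have "fst z \<in> fst ` ?L" using z(1) da by simp
    hence "fst z \<le> Max (fst ` ?L)" using Max_ge[OF fin] by blast
    thus False using a z by simp
  qed
  then obtain i where "(i, snd a) \<in> back_corners n B" using bc_col aB by blast
  thus ?thesis unfolding Pset_def by blast
qed

lemma Qset_ne: "Qset n B \<noteq> {}"
proof -
  obtain x where x: "x \<in> B" using ne by blast
  let ?L = "level n B (d x)"
  have xL: "x \<in> ?L" using x lev_iff by simp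
  have fin: "finite (fst ` ?L)" using lev_fin by simp
  have ne': "fst ` ?L \<noteq> {}" using xL by blast
  obtain a where a: "a \<in> ?L" "fst a = Min (fst ` ?L)" using Min_in[OF fin ne'] by auto
  have aB: "a \<in> B" and da: "d a = d x" using a lev_iff by auto
  have "\<not> hp a"
  proof
    assume "hp a"
    then obtain z where z: "z \<in> level n B (d a)" "fst z < fst a" unfolding hp_def by blast
    have "fst z \<in> fst ` ?L" using z(1) da by simp
    hence "Min (fst ` ?L) \<le> fst z" using Min_le[OF fin] by blast
    thus False using a z by simp
  qed
  then obtain j where "(fst a, j) \<in> back_corners n B" using bc_row aB by blast
  thus ?thesis unfolding Qset_def by blast
qed

lemma stepL:
  assumes a: "a \<in> B" and b: "b \<in> B" and sa: "snd a = j" and sb: "snd b = j + 1" and r: "fst b < fst a"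
  shows "\<exists>y. nxt n B b y \<and> fst y \<le> fst a"
proof -
  have ge: "d b \<le> d a"
  proof (rule ccontr)
    assume "\<not> d b \<le> d a"
    then obtain z where z: "z \<in> B" "snw z b" "d z = d a" using K2[OF b, of "d a"] by auto
    have "snd z \<noteq> j"
    proof
      assume "snd z = j" hence "z = a" using B_snd z a sa by simp
      thus False using z r by (simp add: snw_def)
    qed
    hence "snd z < snd a" using z sa sb by (simp add: snw_def)
    moreover have "fst z < fst a" using z r by (simp add: snw_def)
    ultimately have "snw z a" by (simp add: snw_def)
    thus False using K1[OF z(1) a] z by simp
  qed
  show ?thesis
  proof (cases "d a = d b")
    case True
    have aL: "a \<in> level n B (d b)" using a True lev_iff by simp
    hence "hs b" unfolding hs_def using r by blast
    then obtain y where y: "nxt n B b y" using nxt_ex b by blast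
    have "fst y \<le> fst a" using nxt_props(6)[OF y aL r] .
    thus ?thesis using y by blast
  next
    case False
    hence "d b < d a" using ge by simp
    then obtain z where z: "z \<in> B" "snw z a" "d z = d b" using K2[OF a] by blast
    have zb: "z \<noteq> b" using z sa sb by (auto simp: snw_def)
    have "\<not> fst z < fst b"
    proof
      assume "fst z < fst b"
      moreover have "snd z < snd b" using z sa sb by (simp add: snw_def)
      ultimately have "snw z b" by (simp add: snw_def)
      thus False using K1[OF z(1) b] z by simp
    qed
    moreover have "fst z \<noteq> fst b" using B_fst z b zb by blast
    ultimately have zgt: "fst b < fst z" by simp
    have zL: "z \<in> level n B (d b)" using z lev_iff by simp
    hence "hs b" unfolding hs_def using zgt by blast
    then obtain y where y: "nxt n B b y" using nxt_ex b by blast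
    have "fst y \<le> fst z" using nxt_props(6)[OF y zL zgt] .
    moreover have "fst z < fst a" using z by (simp add: snw_def)
    ultimately have "fst y \<le> fst a" by simp
    thus ?thesis using y by blast
  qed
qed

lemma stepN:
  assumes a: "a \<in> B" and b: "b \<in> B" and sa: "snd a = j" and sb: "snd b = j + 1" and r: "fst a < fst b"
    and yb: "nxt n B b yb"
  shows "\<exists>ya. nxt n B a ya \<and> fst ya < fst yb"
proof -
  have sab: "snw a b" using r sa sb by (simp add: snw_def)
  have dab: "d a + 1 \<le> d b" using K1[OF a b sab] .
  have ybB: "yb \<in> B" and dyb: "d yb = d b" and ybf: "fst b < fst yb" and ybs: "snd yb < snd b"
    using nxt_props[OF yb] by auto
  have "yb \<noteq> a" using dyb dab by auto
  hence "snd yb \<noteq> j" using B_snd ybB a sa by blast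
  hence ybj: "snd yb < j" using ybs sb by simp
  obtain x where x: "x \<in> B" "snw x yb" "d x = d a" using K2[OF ybB, of "d a"] dyb dab by auto
  have xL: "x \<in> level n B (d a)" and aL: "a \<in> level n B (d a)" using x a lev_iff by auto
  have "snd x < snd a" using x ybj sa by (simp add: snw_def)
  hence xa: "fst a < fst x" using lev_anti_rev[OF aL xL] by simp
  hence "hs a" unfolding hs_def using xL by blast
  then obtain ya where ya: "nxt n B a ya" using nxt_ex a by blast
  have "fst ya \<le> fst x" using nxt_props(6)[OF ya xL xa] .
  moreover have "fst x < fst yb" using x by (simp add: snw_def)
  ultimately have "fst ya < fst yb" by simp
  thus ?thesis using ya by blast
qed

lemma stepRL:
  assumes a: "a \<in> B" and b: "b \<in> B" and fa: "fst a = i" and fb: "fst b = i + 1" and c: "snd b < snd a"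
  shows "\<exists>x. nxt n B x b \<and> snd x \<le> snd a"
proof -
  have ge: "d b \<le> d a"
  proof (rule ccontr)
    assume "\<not> d b \<le> d a"
    then obtain z where z: "z \<in> B" "snw z b" "d z = d a" using K2[OF b, of "d a"] by auto
    have "fst z \<noteq> i"
    proof
      assume "fst z = i" hence "z = a" using B_fst z a fa by simp
      thus False using z c by (simp add: snw_def)
    qed
    hence "fst z < fst a" using z fa fb by (simp add: snw_def)
    moreover have "snd z < snd a" using z c by (simp add: snw_def)
    ultimately have "snw z a" by (simp add: snw_def)
    thus False using K1[OF z(1) a] z by simp
  qed
  show ?thesis
  proof (cases "d a = d b")
    case True
    have aL: "a \<in> level n B (d b)" and bL: "b \<in> level n B (d b)" using a b True lev_iff by auto
    have ab: "fst a < fst b" using fa fb by simp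
    hence "hp b" unfolding hp_def using aL by blast
    then obtain x where x: "nxt n B x b" using nxt_ex_pred b by blast
    have dx: "d x = d b" using nxt_props(3)[OF x] by simp
    have aL': "a \<in> level n B (d x)" using aL dx by simp
    have "fst a \<le> fst x" using nxt_props(7)[OF x aL' ab] .
    moreover have xL: "x \<in> level n B (d b)" using nxt_props(1)[OF x] dx lev_iff by simp
    ultimately have "snd x \<le> snd a" using lev_anti_le[OF aL xL] by simp
    thus ?thesis using x by blast
  next
    case False
    hence "d b < d a" using ge by simp
    then obtain z where z: "z \<in> B" "snw z a" "d z = d b" using K2[OF a] by blast
    have zb: "z \<noteq> b" using z fa fb by (auto simp: snw_def)
    have "\<not> snd z < snd b"
    proof
      assume "snd z < snd b"
      moreover have "fst z < fst b" using z fa fb by (simp add: snw_def)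
      ultimately have "snw z b" by (simp add: snw_def)
      thus False using K1[OF z(1) b] z by simp
    qed
    moreover have "snd z \<noteq> snd b" using B_snd z b zb by blast
    ultimately have zgt: "snd b < snd z" by simp
    have zL: "z \<in> level n B (d b)" and bL: "b \<in> level n B (d b)" using z b lev_iff by auto
    have zf: "fst z < fst b" using lev_anti_rev[OF zL bL zgt] .
    hence "hp b" unfolding hp_def using zL by blast
    then obtain x where x: "nxt n B x b" using nxt_ex_pred b by blast
    have dx: "d x = d b" using nxt_props(3)[OF x] by simp
    have zL': "z \<in> level n B (d x)" using zL dx by simp
    have "fst z \<le> fst x" using nxt_props(7)[OF x zL' zf] .
    moreover have xL: "x \<in> level n B (d b)" using nxt_props(1)[OF x] dx lev_iff by simp
    ultimately have "snd x \<le> snd z" using lev_anti_le[OF zL xL] by simp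
    moreover have "snd z < snd a" using z by (simp add: snw_def)
    ultimately have "snd x \<le> snd a" by simp
    thus ?thesis using x by blast
  qed
qed

lemma stepRN:
  assumes a: "a \<in> B" and b: "b \<in> B" and fa: "fst a = i" and fb: "fst b = i + 1" and c: "snd a < snd b"
    and xb: "nxt n B xb b"
  shows "\<exists>xa. nxt n B xa a \<and> snd xa < snd xb"
proof -
  have sab: "snw a b" using c fa fb by (simp add: snw_def)
  have dab: "d a + 1 \<le> d b" using K1[OF a b sab] .
  have xbB: "xb \<in> B" and dxb: "d b = d xb" and xbf: "fst xb < fst b" and xbs: "snd b < snd xb"
    using nxt_props[OF xb] by auto
  have "xb \<noteq> a" using dxb dab by auto
  hence "fst xb \<noteq> i" using B_fst xbB a fa by blast
  hence xbi: "fst xb < i" using xbf fb by simp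
  obtain x where x: "x \<in> B" "snw x xb" "d x = d a" using K2[OF xbB, of "d a"] dxb dab by auto
  have xL: "x \<in> level n B (d a)" and aL: "a \<in> level n B (d a)" using x a lev_iff by auto
  have xa: "fst x < fst a" using x xbi fa by (simp add: snw_def)
  hence "hp a" unfolding hp_def using xL by blast
  then obtain xa where xa': "nxt n B xa a" using nxt_ex_pred a by blast
  have dxa: "d xa = d a" using nxt_props(3)[OF xa'] by simp
  have xL': "x \<in> level n B (d xa)" using xL dxa by simp
  have "fst x \<le> fst xa" using nxt_props(7)[OF xa' xL' xa] .
  moreover have xaL: "xa \<in> level n B (d a)" using nxt_props(1)[OF xa'] dxa lev_iff by simp
  ultimately have "snd xa \<le> snd x" using lev_anti_le[OF xL xaL] by simp
  moreover have "snd x < snd xb" using x by (simp add: snw_def)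
  ultimately have "snd xa < snd xb" by simp
  thus ?thesis using xa' by blast
qed

end


lemma amb_intro: "n > 0 \<Longrightarrow> ppB n B \<Longrightarrow> B \<noteq> {} \<Longrightarrow> amb n B"
  by (simp add: amb_def)

lemma fw_empty: "fw n {} = {}" by (simp add: fw_def level_def)
lemma bc_empty: "back_corners n {} = {}" by (simp add: back_corners_def level_def)

definition Bk :: "int \<Rightarrow> (int \<Rightarrow> int) \<Rightarrow> nat \<Rightarrow> (int \<times> int) set" where
  "Bk n w k = (fw n ^^ k) (balls w)"

lemma Bk_Suc: "Bk n w (Suc k) = fw n (Bk n w k)" by (simp add: Bk_def)

lemma w_shift: fixes w :: "int \<Rightarrow> int" and n k i :: int
  assumes "\<forall>i. w (i + n) = w i + n" shows "w (i + k * n) = w i + k * n"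
proof (rule int_cases_nat[where k=k])
  fix j :: nat show "w (i + int j * n) = w i + int j * n"
  proof (induction j)
    case 0 thus ?case by simp
  next
    case (Suc j)
    have "w (i + int (Suc j) * n) = w ((i + int j * n) + n)" by (simp add: algebra_simps)
    also have "\<dots> = w (i + int j * n) + n" using assms by simp
    finally show ?case using Suc by (simp add: algebra_simps)
  qed
next
  fix j :: nat show "w (i + - int j * n) = w i + - int j * n"
  proof (induction j)
    case 0 thus ?case by simp
  next
    case (Suc j)
    have "w (i + - int j * n) = w ((i + - int (Suc j) * n) + n)" by (simp add: algebra_simps)
    also have "\<dots> = w (i + - int (Suc j) * n) + n" using assms by simp
    finally show ?case using Suc by (simp add: algebra_simps)
  qed
qed

lemma balls_pp: assumes "inj w" "\<forall>i. w (i + n) = w i + n" shows "ppB n (balls w)"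
  unfolding ppB_def invp_def
proof (intro conjI ballI allI)
  fix b k assume "b \<in> balls w"
  then obtain i where b: "b = (i, w i)" unfolding balls_def by blast
  have "transl n k b = (i + k * n, w (i + k * n))" using b w_shift[OF assms(2)] by (simp add: transl_def)
  thus "transl n k b \<in> balls w" unfolding balls_def by blast
next
  show "inj_on fst (balls w)" unfolding balls_def by (auto simp: inj_on_def)
  show "inj_on snd (balls w)" using assms(1) unfolding balls_def by (auto simp: inj_on_def inj_def)
qed

lemma Bk_pp: assumes "n > 0" "ppB n (balls w)" shows "ppB n (Bk n w k)"
proof (induction k)
  case 0 thus ?case using assms by (simp add: Bk_def)
next
  case (Suc k)
  show ?case
  proof (cases "Bk n w k = {}")
    case True thus ?thesis by (simp add: Bk_Suc fw_empty ppB_def invp_def)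
  next
    case False
    interpret amb n "Bk n w k" using amb_intro assms Suc False by blast
    show ?thesis using fw_pp Bk_Suc by simp
  qed
qed

lemma crs_ne: "X \<noteq> {} \<Longrightarrow> crs n X \<noteq> {}" by (auto simp: crs_def)

lemma crs_sub: "n > 0 \<Longrightarrow> crs n X \<subseteq> {0..<n}" by (auto simp: crs_def)
lemma rrs_sub: "n > 0 \<Longrightarrow> rrs n X \<subseteq> {0..<n}" by (auto simp: rrs_def)

context
  fixes n :: int and w :: "int \<Rightarrow> int"
  assumes n: "n > 0" and pp0: "ppB n (balls w)"
begin

lemma ppk: "ppB n (Bk n w k)" using Bk_pp[OF n pp0] .

lemma S_mono: "crs n (Bk n w (Suc k)) \<subseteq> crs n (Bk n w k)"
proof (cases "Bk n w k = {}")
  case True thus ?thesis by (simp add: Bk_Suc fw_empty)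
next
  case False
  interpret amb n "Bk n w k" using amb_intro n ppk False by blast
  show ?thesis using crs_fw_sub Bk_Suc by simp
qed

lemma R_mono: "rrs n (Bk n w (Suc k)) \<subseteq> rrs n (Bk n w k)"
proof (cases "Bk n w k = {}")
  case True thus ?thesis by (simp add: Bk_Suc fw_empty)
next
  case False
  interpret amb n "Bk n w k" using amb_intro n ppk False by blast
  show ?thesis using rrs_fw_sub Bk_Suc by simp
qed

lemma P_eq: "ambc_P n w k = crs n (Bk n w k) - crs n (Bk n w (Suc k))"
proof (cases "Bk n w k = {}")
  case True thus ?thesis by (simp add: ambc_P_def Bk_Suc fw_empty bc_empty Bk_def[symmetric] crs_def)
next
  case False
  interpret amb n "Bk n w k" using amb_intro n ppk False by blast
  have "ambc_P n w k = Pset n (Bk n w k)" unfolding ambc_P_def Pset_def Bk_def by simp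
  thus ?thesis using Pset_eq Bk_Suc by simp
qed

lemma Q_eq: "ambc_Q n w k = rrs n (Bk n w k) - rrs n (Bk n w (Suc k))"
proof (cases "Bk n w k = {}")
  case True thus ?thesis by (simp add: ambc_Q_def Bk_Suc fw_empty bc_empty Bk_def[symmetric] rrs_def)
next
  case False
  interpret amb n "Bk n w k" using amb_intro n ppk False by blast
  have "ambc_Q n w k = Qset n (Bk n w k)" unfolding ambc_Q_def Qset_def Bk_def by simp
  thus ?thesis using Qset_eq Bk_Suc by simp
qed

lemma card_dec: "Bk n w k \<noteq> {} \<Longrightarrow> card (crs n (Bk n w k)) + k \<le> nat n"
proof (induction k)
  case 0
  have "card (crs n (Bk n w 0)) \<le> card {0..<n}" using crs_sub[OF n] by (intro card_mono) auto
  thus ?case by simp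
next
  case (Suc k)
  have ne: "Bk n w k \<noteq> {}" using Suc.prems by (auto simp: Bk_Suc fw_empty)
  interpret amb n "Bk n w k" using amb_intro n ppk ne by blast
  have "Pset n (Bk n w k) \<noteq> {}" by (rule Pset_ne)
  hence "crs n (Bk n w (Suc k)) \<subset> crs n (Bk n w k)" using Pset_eq crs_fw_sub Bk_Suc by auto
  moreover have fin: "finite (crs n (Bk n w k))" using crs_sub[OF n] by (rule finite_subset) simp
  ultimately have "card (crs n (Bk n w (Suc k))) < card (crs n (Bk n w k))"
    using psubset_card_mono by blast
  thus ?case using Suc.IH[OF ne] by simp
qed

lemma Bk_end: "Bk n w (nat n) = {}"
proof (rule ccontr)
  assume ne: "Bk n w (nat n) \<noteq> {}"
  have "card (crs n (Bk n w (nat n))) \<ge> 1"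
    using crs_ne[OF ne] crs_sub[OF n] finite_subset by (metis One_nat_def Suc_leI card_gt_0_iff finite_atLeastLessThan_int)
  thus False using card_dec[OF ne] by simp
qed

lemma S_end: "crs n (Bk n w (nat n)) = {}" "rrs n (Bk n w (nat n)) = {}"
  using Bk_end by (simp_all add: crs_def rrs_def)

end

lemma exit_lemma:
  fixes S :: "nat \<Rightarrow> int set"
  assumes mono: "\<And>k. S (Suc k) \<subseteq> S k" and end': "S N = {}"
  shows "c \<in> S k0 \<Longrightarrow> \<exists>r\<ge>k0. c \<in> S r \<and> c \<notin> S (Suc r)"
proof (induction "N - k0" arbitrary: k0)
  case 0
  hence "N \<le> k0" by simp
  hence "S k0 \<subseteq> S N"
  proof (induction k0)
    case 0 thus ?case by simp
  next
    case (Suc k)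
    show ?case
    proof (cases "N \<le> k")
      case True thus ?thesis using Suc mono by blast
    next
      case False hence "N = Suc k" using Suc by simp
      thus ?thesis by simp
    qed
  qed
  thus ?case using 0 end' by blast
next
  case (Suc d)
  show ?case
  proof (cases "c \<in> S (Suc k0)")
    case True
    have "d = N - Suc k0" using Suc by simp
    then obtain r where "r \<ge> Suc k0" "c \<in> S r" "c \<notin> S (Suc r)" using Suc.hyps True by blast
    thus ?thesis by (intro exI[of _ r]) auto
  next
    case False thus ?thesis using Suc by blast
  qed
qed

lemma mono_le: fixes S :: "nat \<Rightarrow> int set" assumes mono: "\<And>k. S (Suc k) \<subseteq> S k"
  shows "k \<le> k' \<Longrightarrow> S k' \<subseteq> S k"
proof (induction k')
  case 0 thus ?case by simp
next
  case (Suc k')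
  show ?case
  proof (cases "k \<le> k'")
    case True thus ?thesis using Suc mono by blast
  next
    case False hence "k = Suc k'" using Suc by simp
    thus ?thesis by simp
  qed
qed

lemma tau_yes:
  fixes S :: "nat \<Rightarrow> int set"
  assumes mono: "\<And>k. S (Suc k) \<subseteq> S k" and end': "S N = {}" and i0: "i \<in> S 0"
    and step: "\<And>k. i \<in> S k \<Longrightarrow> c \<in> S (Suc k)"
  shows "\<exists>r r'. r < r' \<and> i \<in> S r - S (Suc r) \<and> c \<in> S r' - S (Suc r')"
proof -
  obtain r where r: "i \<in> S r" "i \<notin> S (Suc r)" using exit_lemma[OF mono end' i0] by blast
  have "c \<in> S (Suc r)" using step r by blast
  then obtain r' where "r' \<ge> Suc r" "c \<in> S r'" "c \<notin> S (Suc r')" using exit_lemma[OF mono end'] by blast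
  thus ?thesis using r by (intro exI[of _ r] exI[of _ r']) auto
qed

lemma tau_no:
  fixes S :: "nat \<Rightarrow> int set"
  assumes mono: "\<And>k. S (Suc k) \<subseteq> S k" and step: "\<And>k. c \<in> S k \<Longrightarrow> i \<in> S k"
  shows "\<not> (\<exists>r r'. r < r' \<and> i \<in> S r - S (Suc r) \<and> c \<in> S r' - S (Suc r'))"
proof
  assume "\<exists>r r'. r < r' \<and> i \<in> S r - S (Suc r) \<and> c \<in> S r' - S (Suc r')"
  then obtain r r' where h: "r < r'" "i \<notin> S (Suc r)" "c \<in> S r'" by blast
  have "i \<in> S r'" using step h by blast
  moreover have "S r' \<subseteq> S (Suc r)" using mono_le[of S, OF mono] h(1) by simp
  ultimately show False using h by blast
qed



lemma col_res: fixes n j :: int assumes n: "n > 0" and X: "ppB n X" and r: "j mod n \<in> crs n X"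
  shows "\<exists>z\<in>X. snd z = j"
proof -
  obtain z where z: "z \<in> X" "j mod n = snd z mod n" using r unfolding crs_def by (auto simp: image_iff)
  have "n dvd (j - snd z)" using z(2) by (simp add: mod_eq_dvd_iff)
  then obtain t where t0: "j - snd z = n * t" unfolding dvd_def by blast
  hence t: "j - snd z = t * n" by (simp add: mult.commute)
  have "transl n t z \<in> X" using X z(1) by (simp add: ppB_def invp_def)
  moreover have "snd (transl n t z) = j" using t by simp
  ultimately show ?thesis by blast
qed

lemma row_res: fixes n j :: int assumes n: "n > 0" and X: "ppB n X" and r: "j mod n \<in> rrs n X"
  shows "\<exists>z\<in>X. fst z = j"
proof -
  obtain z where z: "z \<in> X" "j mod n = fst z mod n" using r unfolding rrs_def by (auto simp: image_iff)
  have "n dvd (j - fst z)" using z(2) by (simp add: mod_eq_dvd_iff)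
  then obtain t where t0: "j - fst z = n * t" unfolding dvd_def by blast
  hence t: "j - fst z = t * n" by (simp add: mult.commute)
  have "transl n t z \<in> X" using X z(1) by (simp add: ppB_def invp_def)
  moreover have "fst (transl n t z) = j" using t by simp
  ultimately show ?thesis by blast
qed

context
  fixes n :: int and w :: "int \<Rightarrow> int"
  assumes n: "n > 0" and pp0: "ppB n (balls w)"
begin

lemma amb_k: "Bk n w k \<noteq> {} \<Longrightarrow> amb n (Bk n w k)" using amb_intro[OF n ppk[OF n pp0]] .

lemma claimL:
  assumes a0: "(ra, j) \<in> balls w" and b0: "(rb, j + 1) \<in> balls w" and r0: "rb < ra"
  shows "(\<exists>a\<in>Bk n w k. snd a = j) \<longrightarrow> (\<exists>a\<in>Bk n w k. \<exists>b\<in>Bk n w k. snd a = j \<and> snd b = j + 1 \<and> fst b < fst a)"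
proof (induction k)
  case 0
  have h: "(ra, j) \<in> Bk n w 0" "(rb, j + 1) \<in> Bk n w 0" using a0 b0 by (simp_all add: Bk_def)
  have "snd (ra, j) = j \<and> snd (rb, j + 1) = j + 1 \<and> fst (rb, j + 1) < fst (ra, j)" using r0 by simp
  thus ?case using h by blast
next
  case (Suc k)
  show ?case
  proof
    assume "\<exists>a\<in>Bk n w (Suc k). snd a = j"
    then obtain a' where a': "a' \<in> fw n (Bk n w k)" "snd a' = j" using Bk_Suc by auto
    then obtain x' y' where xy: "a' = (fst y', snd x')" "nxt n (Bk n w k) x' y'" unfolding fw_char by blast
    have ne: "Bk n w k \<noteq> {}" using a' by (auto simp: fw_empty)
    interpret amb n "Bk n w k" using amb_k ne .
    have x'B: "x' \<in> Bk n w k" using nxt_props(1)[OF xy(2)] .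
    have "snd x' = j" using xy a' by simp
    then obtain a b where ab: "a \<in> Bk n w k" "b \<in> Bk n w k" "snd a = j" "snd b = j + 1" "fst b < fst a"
      using Suc x'B by blast
    have "a = x'" using B_snd[OF ab(1) x'B] ab(3) \<open>snd x' = j\<close> by simp
    obtain y where y: "nxt n (Bk n w k) b y" "fst y \<le> fst a" using stepL[OF ab(1,2,3,4,5)] by blast
    have "(fst y, snd b) \<in> fw n (Bk n w k)" unfolding fw_char using y(1) by blast
    hence n1: "(fst y, j + 1) \<in> Bk n w (Suc k)" using ab(4) Bk_Suc by simp
    have n2: "(fst y', j) \<in> Bk n w (Suc k)" using a' xy unfolding Bk_Suc by simp
    have "fst a < fst y'" using nxt_props(4)[OF xy(2)] \<open>a = x'\<close> by simp
    hence "fst y < fst y'" using y by simp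
    hence "snd (fst y', j) = j \<and> snd (fst y, j + 1) = j + 1 \<and> fst (fst y, j + 1) < fst (fst y', j)" by simp
    thus "\<exists>a\<in>Bk n w (Suc k). \<exists>b\<in>Bk n w (Suc k). snd a = j \<and> snd b = j + 1 \<and> fst b < fst a"
      using n1 n2 by blast
  qed
qed

lemma claimL_S:
  assumes a0: "(ra, j) \<in> balls w" and b0: "(rb, j + 1) \<in> balls w" and r0: "rb < ra"
    and "j mod n \<in> crs n (Bk n w k)"
  shows "(j + 1) mod n \<in> crs n (Bk n w (Suc k))"
proof -
  obtain a0 where "a0 \<in> Bk n w k" "snd a0 = j" using col_res[OF n ppk[OF n pp0]] assms(4) by blast
  then obtain a b where ab: "a \<in> Bk n w k" "b \<in> Bk n w k" "snd a = j" "snd b = j + 1" "fst b < fst a"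
    using claimL[OF a0 b0 r0, of k] by blast
  have ne: "Bk n w k \<noteq> {}" using ab by auto
  interpret amb n "Bk n w k" using amb_k ne .
  obtain y where y: "nxt n (Bk n w k) b y" using stepL[OF ab(1,2,3,4,5)] by blast
  have "(fst y, snd b) \<in> Bk n w (Suc k)" using y unfolding Bk_Suc fw_char by blast
  moreover have "(j + 1) mod n = snd (fst y, snd b) mod n" using ab by simp
  ultimately show ?thesis unfolding crs_def by blast
qed

lemma claimN:
  assumes a0: "(ra, j) \<in> balls w" and b0: "(rb, j + 1) \<in> balls w" and r0: "ra < rb"
  shows "(\<exists>b\<in>Bk n w k. snd b = j + 1) \<longrightarrow> (\<exists>a\<in>Bk n w k. \<exists>b\<in>Bk n w k. snd a = j \<and> snd b = j + 1 \<and> fst a < fst b)"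
proof (induction k)
  case 0
  have h: "(ra, j) \<in> Bk n w 0" "(rb, j + 1) \<in> Bk n w 0" using a0 b0 by (simp_all add: Bk_def)
  have "snd (ra, j) = j \<and> snd (rb, j + 1) = j + 1 \<and> fst (ra, j) < fst (rb, j + 1)" using r0 by simp
  thus ?case using h by blast
next
  case (Suc k)
  show ?case
  proof
    assume "\<exists>b\<in>Bk n w (Suc k). snd b = j + 1"
    then obtain b' where b': "b' \<in> fw n (Bk n w k)" "snd b' = j + 1" using Bk_Suc by auto
    then obtain x' y' where xy: "b' = (fst y', snd x')" "nxt n (Bk n w k) x' y'" unfolding fw_char by blast
    have ne: "Bk n w k \<noteq> {}" using b' by (auto simp: fw_empty)
    interpret amb n "Bk n w k" using amb_k ne .
    have x'B: "x' \<in> Bk n w k" using nxt_props(1)[OF xy(2)] .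
    have "snd x' = j + 1" using xy b' by simp
    then obtain a b where ab: "a \<in> Bk n w k" "b \<in> Bk n w k" "snd a = j" "snd b = j + 1" "fst a < fst b"
      using Suc x'B by blast
    have "b = x'" using B_snd[OF ab(2) x'B] ab(4) \<open>snd x' = j + 1\<close> by simp
    hence yb: "nxt n (Bk n w k) b y'" using xy by simp
    obtain ya where ya: "nxt n (Bk n w k) a ya" "fst ya < fst y'" using stepN[OF ab(1,2,3,4,5) yb] by blast
    have "(fst ya, snd a) \<in> fw n (Bk n w k)" unfolding fw_char using ya(1) by blast
    hence n1: "(fst ya, j) \<in> Bk n w (Suc k)" using ab(3) Bk_Suc by simp
    have n2: "(fst y', j + 1) \<in> Bk n w (Suc k)" using b' xy unfolding Bk_Suc by simp
    have "snd (fst ya, j) = j \<and> snd (fst y', j + 1) = j + 1 \<and> fst (fst ya, j) < fst (fst y', j + 1)" using ya by simp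
    thus "\<exists>a\<in>Bk n w (Suc k). \<exists>b\<in>Bk n w (Suc k). snd a = j \<and> snd b = j + 1 \<and> fst a < fst b"
      using n1 n2 by blast
  qed
qed

lemma claimN_S:
  assumes a0: "(ra, j) \<in> balls w" and b0: "(rb, j + 1) \<in> balls w" and r0: "ra < rb"
    and "(j + 1) mod n \<in> crs n (Bk n w k)"
  shows "j mod n \<in> crs n (Bk n w k)"
proof -
  obtain b0 where "b0 \<in> Bk n w k" "snd b0 = j + 1" using col_res[OF n ppk[OF n pp0]] assms(4) by blast
  then obtain a b where ab: "a \<in> Bk n w k" "snd a = j" using claimN[OF a0 b0 r0, of k] by blast
  moreover have "j mod n = snd a mod n" using ab by simp
  ultimately show ?thesis unfolding crs_def by blast
qed

lemma claimRL:
  assumes a0: "(j, ca) \<in> balls w" and b0: "(j + 1, cb) \<in> balls w" and r0: "cb < ca"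
  shows "(\<exists>a\<in>Bk n w k. fst a = j) \<longrightarrow> (\<exists>a\<in>Bk n w k. \<exists>b\<in>Bk n w k. fst a = j \<and> fst b = j + 1 \<and> snd b < snd a)"
proof (induction k)
  case 0
  have h: "(j, ca) \<in> Bk n w 0" "(j + 1, cb) \<in> Bk n w 0" using a0 b0 by (simp_all add: Bk_def)
  have "fst (j, ca) = j \<and> fst (j + 1, cb) = j + 1 \<and> snd (j + 1, cb) < snd (j, ca)" using r0 by simp
  thus ?case using h by blast
next
  case (Suc k)
  show ?case
  proof
    assume "\<exists>a\<in>Bk n w (Suc k). fst a = j"
    then obtain a' where a': "a' \<in> fw n (Bk n w k)" "fst a' = j" using Bk_Suc by auto
    then obtain x' y' where xy: "a' = (fst y', snd x')" "nxt n (Bk n w k) x' y'" unfolding fw_char by blast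
    have ne: "Bk n w k \<noteq> {}" using a' by (auto simp: fw_empty)
    interpret amb n "Bk n w k" using amb_k ne .
    have y'B: "y' \<in> Bk n w k" using nxt_props(2)[OF xy(2)] .
    have "fst y' = j" using xy a' by simp
    then obtain a b where ab: "a \<in> Bk n w k" "b \<in> Bk n w k" "fst a = j" "fst b = j + 1" "snd b < snd a"
      using Suc y'B by blast
    have "a = y'" using B_fst[OF ab(1) y'B] ab(3) \<open>fst y' = j\<close> by simp
    obtain x where x: "nxt n (Bk n w k) x b" "snd x \<le> snd a" using stepRL[OF ab(1,2,3,4,5)] by blast
    have "(fst b, snd x) \<in> fw n (Bk n w k)" unfolding fw_char using x(1) by blast
    hence n1: "(j + 1, snd x) \<in> Bk n w (Suc k)" using ab(4) Bk_Suc by simp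
    have n2: "(j, snd x') \<in> Bk n w (Suc k)" using a' xy unfolding Bk_Suc by simp
    have "snd a < snd x'" using nxt_props(5)[OF xy(2)] \<open>a = y'\<close> by simp
    hence "snd x < snd x'" using x by simp
    hence "fst (j, snd x') = j \<and> fst (j + 1, snd x) = j + 1 \<and> snd (j + 1, snd x) < snd (j, snd x')" by simp
    thus "\<exists>a\<in>Bk n w (Suc k). \<exists>b\<in>Bk n w (Suc k). fst a = j \<and> fst b = j + 1 \<and> snd b < snd a"
      using n1 n2 by blast
  qed
qed

lemma claimRL_S:
  assumes a0: "(j, ca) \<in> balls w" and b0: "(j + 1, cb) \<in> balls w" and r0: "cb < ca"
    and "j mod n \<in> rrs n (Bk n w k)"
  shows "(j + 1) mod n \<in> rrs n (Bk n w (Suc k))"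
proof -
  obtain a0 where "a0 \<in> Bk n w k" "fst a0 = j" using row_res[OF n ppk[OF n pp0]] assms(4) by blast
  then obtain a b where ab: "a \<in> Bk n w k" "b \<in> Bk n w k" "fst a = j" "fst b = j + 1" "snd b < snd a"
    using claimRL[OF a0 b0 r0, of k] by blast
  have ne: "Bk n w k \<noteq> {}" using ab by auto
  interpret amb n "Bk n w k" using amb_k ne .
  obtain x where x: "nxt n (Bk n w k) x b" using stepRL[OF ab(1,2,3,4,5)] by blast
  have "(fst b, snd x) \<in> Bk n w (Suc k)" using x unfolding Bk_Suc fw_char by blast
  moreover have "(j + 1) mod n = fst (fst b, snd x) mod n" using ab by simp
  ultimately show ?thesis unfolding rrs_def by blast
qed

lemma claimRN:
  assumes a0: "(j, ca) \<in> balls w" and b0: "(j + 1, cb) \<in> balls w" and r0: "ca < cb"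
  shows "(\<exists>b\<in>Bk n w k. fst b = j + 1) \<longrightarrow> (\<exists>a\<in>Bk n w k. \<exists>b\<in>Bk n w k. fst a = j \<and> fst b = j + 1 \<and> snd a < snd b)"
proof (induction k)
  case 0
  have h: "(j, ca) \<in> Bk n w 0" "(j + 1, cb) \<in> Bk n w 0" using a0 b0 by (simp_all add: Bk_def)
  have "fst (j, ca) = j \<and> fst (j + 1, cb) = j + 1 \<and> snd (j, ca) < snd (j + 1, cb)" using r0 by simp
  thus ?case using h by blast
next
  case (Suc k)
  show ?case
  proof
    assume "\<exists>b\<in>Bk n w (Suc k). fst b = j + 1"
    then obtain b' where b': "b' \<in> fw n (Bk n w k)" "fst b' = j + 1" using Bk_Suc by auto
    then obtain x' y' where xy: "b' = (fst y', snd x')" "nxt n (Bk n w k) x' y'" unfolding fw_char by blast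
    have ne: "Bk n w k \<noteq> {}" using b' by (auto simp: fw_empty)
    interpret amb n "Bk n w k" using amb_k ne .
    have y'B: "y' \<in> Bk n w k" using nxt_props(2)[OF xy(2)] .
    have "fst y' = j + 1" using xy b' by simp
    then obtain a b where ab: "a \<in> Bk n w k" "b \<in> Bk n w k" "fst a = j" "fst b = j + 1" "snd a < snd b"
      using Suc y'B by blast
    have "b = y'" using B_fst[OF ab(2) y'B] ab(4) \<open>fst y' = j + 1\<close> by simp
    hence xb: "nxt n (Bk n w k) x' b" using xy by simp
    obtain xa where xa: "nxt n (Bk n w k) xa a" "snd xa < snd x'" using stepRN[OF ab(1,2,3,4,5) xb] by blast
    have "(fst a, snd xa) \<in> fw n (Bk n w k)" unfolding fw_char using xa(1) by blast
    hence n1: "(j, snd xa) \<in> Bk n w (Suc k)" using ab(3) Bk_Suc by simp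
    have n2: "(j + 1, snd x') \<in> Bk n w (Suc k)" using b' xy unfolding Bk_Suc by simp
    have "fst (j, snd xa) = j \<and> fst (j + 1, snd x') = j + 1 \<and> snd (j, snd xa) < snd (j + 1, snd x')" using xa by simp
    thus "\<exists>a\<in>Bk n w (Suc k). \<exists>b\<in>Bk n w (Suc k). fst a = j \<and> fst b = j + 1 \<and> snd a < snd b"
      using n1 n2 by blast
  qed
qed

lemma claimRN_S:
  assumes a0: "(j, ca) \<in> balls w" and b0: "(j + 1, cb) \<in> balls w" and r0: "ca < cb"
    and "(j + 1) mod n \<in> rrs n (Bk n w k)"
  shows "j mod n \<in> rrs n (Bk n w k)"
proof -
  obtain b0 where "b0 \<in> Bk n w k" "fst b0 = j + 1" using row_res[OF n ppk[OF n pp0]] assms(4) by blast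
  then obtain a where ab: "a \<in> Bk n w k" "fst a = j" using claimRN[OF a0 b0 r0, of k] by blast
  moreover have "j mod n = fst a mod n" using ab by simp
  ultimately show ?thesis unfolding rrs_def by blast
qed

end

lemma tau_P: "tau n (ambc_P n w) = {i \<in> {0..<n}. \<exists>r r'. r < r' \<and> i \<in> ambc_P n w r \<and> (i + 1) mod n \<in> ambc_P n w r'}"
  by (simp add: tau_def)

theorem proposition3p6:
  fixes n :: int and w :: "int \<Rightarrow> int"
  assumes "1 \<le> n" and "bij w" and "\<forall>i. w (i + n) = w i + n"
  shows "Ldes n w = tau n (ambc_P n w) \<and> Rdes n w = tau n (ambc_Q n w)"
proof -
  have n: "n > 0" using assms(1) by simp
  have pp0: "ppB n (balls w)" using balls_pp[OF bij_is_inj[OF assms(2)] assms(3)] .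
  have surj: "surj w" using assms(2) bij_is_surj by blast
  have winv: "w (inv w y) = y" for y using surj_f_inv_f[OF surj] .
  have inb: "(inv w y, y) \<in> balls w" for y unfolding balls_def using winv[of y] by (metis (mono_tags, lifting) mem_Collect_eq)
  have inb2: "(x, w x) \<in> balls w" for x unfolding balls_def by blast
  let ?S = "\<lambda>k. crs n (Bk n w k)"
  let ?R = "\<lambda>k. rrs n (Bk n w k)"
  have Smono: "\<And>k. ?S (Suc k) \<subseteq> ?S k" using S_mono[OF n pp0] .
  have Rmono: "\<And>k. ?R (Suc k) \<subseteq> ?R k" using R_mono[OF n pp0] .
  have Send: "?S (nat n) = {}" and Rend: "?R (nat n) = {}" using S_end[OF n pp0] by auto
  have L: "Ldes n w = tau n (ambc_P n w)"
  proof (intro set_eqI iffI)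
    fix i assume "i \<in> Ldes n w"
    hence i: "i \<in> {0..<n}" "inv w (i + 1) < inv w i" unfolding Ldes_def by auto
    have imod: "i mod n = i" using i by simp
    have i0: "i \<in> ?S 0" using inb[of i] imod unfolding crs_def Bk_def by force
    have step: "(i + 1) mod n \<in> ?S (Suc k)" if "i \<in> ?S k" for k
      using claimL_S[OF n pp0 inb[of i] inb[of "i+1"] i(2)] that imod by simp
    obtain r r' where "r < r'" "i \<in> ?S r - ?S (Suc r)" "(i + 1) mod n \<in> ?S r' - ?S (Suc r')"
      using tau_yes[of ?S, OF Smono Send i0 step] by blast
    thus "i \<in> tau n (ambc_P n w)" using i(1) P_eq[OF n pp0] unfolding tau_def by blast
  next
    fix i assume "i \<in> tau n (ambc_P n w)"
    then obtain r r' where i: "i \<in> {0..<n}" "r < r'" "i \<in> ?S r - ?S (Suc r)" "(i + 1) mod n \<in> ?S r' - ?S (Suc r')"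
      unfolding tau_def using P_eq[OF n pp0] by blast
    have imod: "i mod n = i" using i by simp
    have "inv w i \<noteq> inv w (i + 1)" using winv[of i] winv[of "i+1"] by (metis add.right_neutral zero_neq_one add_left_cancel)
    moreover have "\<not> inv w i < inv w (i + 1)"
    proof
      assume lt: "inv w i < inv w (i + 1)"
      have "\<And>k. (i + 1) mod n \<in> ?S k \<Longrightarrow> i \<in> ?S k"
        using claimN_S[OF n pp0 inb[of i] inb[of "i+1"] lt] imod by simp
      thus False using tau_no[of ?S, OF Smono] i by blast
    qed
    ultimately show "i \<in> Ldes n w" using i(1) unfolding Ldes_def by auto
  qed
  have R: "Rdes n w = tau n (ambc_Q n w)"
  proof (intro set_eqI iffI)
    fix i assume "i \<in> Rdes n w"
    hence i: "i \<in> {0..<n}" "w (i + 1) < w i" unfolding Rdes_def by auto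
    have imod: "i mod n = i" using i by simp
    have i0: "i \<in> ?R 0" using inb2[of i] imod unfolding rrs_def Bk_def by force
    have step: "(i + 1) mod n \<in> ?R (Suc k)" if "i \<in> ?R k" for k
      using claimRL_S[OF n pp0 inb2[of i] inb2[of "i+1"] i(2)] that imod by simp
    obtain r r' where "r < r'" "i \<in> ?R r - ?R (Suc r)" "(i + 1) mod n \<in> ?R r' - ?R (Suc r')"
      using tau_yes[of ?R, OF Rmono Rend i0 step] by blast
    thus "i \<in> tau n (ambc_Q n w)" using i(1) Q_eq[OF n pp0] unfolding tau_def by blast
  next
    fix i assume "i \<in> tau n (ambc_Q n w)"
    then obtain r r' where i: "i \<in> {0..<n}" "r < r'" "i \<in> ?R r - ?R (Suc r)" "(i + 1) mod n \<in> ?R r' - ?R (Suc r')"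
      unfolding tau_def using Q_eq[OF n pp0] by blast
    have imod: "i mod n = i" using i by simp
    have "w i \<noteq> w (i + 1)" using bij_is_inj[OF assms(2)] by (metis add.right_neutral zero_neq_one add_left_cancel injD)
    moreover have "\<not> w i < w (i + 1)"
    proof
      assume lt: "w i < w (i + 1)"
      have "\<And>k. (i + 1) mod n \<in> ?R k \<Longrightarrow> i \<in> ?R k"
        using claimRN_S[OF n pp0 inb2[of i] inb2[of "i+1"] lt] imod by simp
      thus False using tau_no[of ?R, OF Rmono] i by blast
    qed
    ultimately show "i \<in> Rdes n w" using i(1) unfolding Rdes_def by auto
  qed
  show ?thesis using L R by simp
qed


end
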